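(* Let $X$ be a smooth projective split toric variety over $\mathbb{Q}$ with $-K_X$ globally generated, of dimension $d$, with $r=\operatorname{rank}\operatorname{Pic}(X)$. For every fixed $A>0$, as $B\to\infty$, $$\#\big(\mathcal{A}(B)\setminus\mathcal{A}^{(A)\flat}(B)\big)=O_A\big(B(\log B)^{r-2}\log\log B\big).$$
   Context: $X$ is defined by a complete regular fan $\Delta$ in $N_\mathbb{R}$, $N\cong\mathbb{Z}^d$, $M=\operatorname{Hom}(N,\mathbb{Z})$; $\Delta(1)$ is the set of rays, $n=\#\Delta(1)=r+d$, $n_\rho$ the primitive generator of $\rho$, $\Delta_{\max}$ the set of maximal cones, $\sigma(1)$ the rays of $\sigma$. For $\sigma\in\Delta_{\max}$, $\{n_\rho:\rho\in\sigma(1)\}$ is a basis of $N$; let $m_\sigma\in M$ be the unique element with $\langle m_\sigma,n_\rho\rangle=1$ for all $\rho\in\sigma(1)$, and $a_\rho(\sigma)=1-\langle m_\sigma,n_\rho\rangle$ (which is $\ge0$). For $\mathbf{X}=(X_\rho)_{\rho\in\Delta(1)}$ with positive entries, $\mathbf{X}^{D_0(\sigma)}=\prod_\rho X_\rho^{a_\rho(\sigma)}$. Let $\mathcal{A}(B)=\{\mathbf{X}\in\mathbb{Z}_{\ge1}^{\Delta(1)}:\max_{\sigma\in\Delta_{\max}}\mathbf{X}^{D_0(\sigma)}\le B\}$. For $\sigma\in\Delta_{\max}$ and $\rho'\in\sigma(1)$, let $n^\vee_{\sigma,\rho'}\in M$ be the element of the dual basis with $\langle n^\vee_{\sigma,\rho'},n_\rho\rangle=\delta_{\rho\rho'}$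 for $\rho\in\sigma(1)$, and $\mathbf{X}^{E_\sigma(\rho')}=\prod_{\rho\notin\sigma(1)}X_\rho^{-\langle n^\vee_{\sigma,\rho'},n_\rho\rangle}$. Then $\mathcal{A}^{(A)\flat}(B)=\{\mathbf{X}\in\mathcal{A}(B):\mathbf{X}^{E_\sigma(\rho')}\ge(\log B)^A\text{ for all }\sigma\in\Delta_{\max},\rho'\in\sigma(1)\}$. *)

theory Defs
  imports "HOL-Analysis.Analysis" "HOL-Library.Landau_Symbols"
begin

text \<open>
  N = Z^d is rendered as int^'d (the dimension d = CARD('d)),
  M = Hom(N,Z) is identified with int^'d via the standard pairing.
  The rays Delta(1) are indexed by the elements of a finite type 'r,
  nv rho is the primitive generator n_rho, and Smax is the set of maximal
  cones, each given by its set of rays sigma(1) (a subset of 'r).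
\<close>

definition pair :: "int^'d \<Rightarrow> int^'d \<Rightarrow> int" where
  "pair m v = (\<Sum>i\<in>UNIV. m $ i * v $ i)"

definition realv :: "int^'d \<Rightarrow> real^'d" where
  "realv v = (\<chi> i. real_of_int (v $ i))"

definition cone_of :: "('r \<Rightarrow> int^'d) \<Rightarrow> 'r set \<Rightarrow> (real^'d) set" where
  "cone_of nv S = {(\<Sum>\<rho>\<in>S. c \<rho> *\<^sub>R realv (nv \<rho>)) | c. \<forall>\<rho>\<in>S. c \<rho> \<ge> 0}"

definition is_Z_basis :: "('r \<Rightarrow> int^'d) \<Rightarrow> 'r set \<Rightarrow> bool" where
  "is_Z_basis nv \<sigma> \<longleftrightarrow> card \<sigma> = CARD('d) \<and>
     (\<forall>v::int^'d. \<exists>!c::'r \<Rightarrow> int. (\<forall>\<rho>. \<rho> \<notin> \<sigma> \<longrightarrow> c \<rho> = 0) \<and>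
          v = (\<Sum>\<rho>\<in>\<sigma>. c \<rho> *s nv \<rho>))"

text \<open>For simplicial cones the fan
  axiom (intersection of two cones is a face of each) is equivalent to
  cone(sigma) \<inter> cone(tau) = cone(sigma \<inter> tau).\<close>
definition complete_regular_fan :: "('r::finite \<Rightarrow> int^'d) \<Rightarrow> 'r set set \<Rightarrow> bool" where
  "complete_regular_fan nv Smax \<longleftrightarrow>
     inj nv \<and>
     (\<forall>\<sigma>\<in>Smax. is_Z_basis nv \<sigma>) \<and>
     (\<forall>\<sigma>\<in>Smax. \<forall>\<tau>\<in>Smax. cone_of nv \<sigma> \<inter> cone_of nv \<tau> = cone_of nv (\<sigma> \<inter> \<tau>)) \<and>
     (\<forall>\<rho>. \<exists>\<sigma>\<in>Smax. \<rho> \<in> \<sigma>) \<and>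
     (\<Union>\<sigma>\<in>Smax. cone_of nv \<sigma>) = UNIV"

text \<open>Projectivity: existence of a strictly convex piecewise linear support
  function (equivalently an ample T-invariant Cartier divisor).\<close>
definition projective_fan :: "('r::finite \<Rightarrow> int^'d) \<Rightarrow> 'r set set \<Rightarrow> bool" where
  "projective_fan nv Smax \<longleftrightarrow>
     (\<exists>h::'r \<Rightarrow> int. \<forall>\<sigma>\<in>Smax. \<exists>m::int^'d.
        (\<forall>\<rho>\<in>\<sigma>. pair m (nv \<rho>) = h \<rho>) \<and> (\<forall>\<rho>. \<rho> \<notin> \<sigma> \<longrightarrow> pair m (nv \<rho>) < h \<rho>))"

definition m_sigma :: "('r \<Rightarrow> int^'d) \<Rightarrow> 'r set \<Rightarrow> int^'d" where
  "m_sigma nv \<sigma> = (THE m. \<forall>\<rho>\<in>\<sigma>. pair m (nv \<rho>) = 1)"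

definition a_coef :: "('r \<Rightarrow> int^'d) \<Rightarrow> 'r set \<Rightarrow> 'r \<Rightarrow> int" where
  "a_coef nv \<sigma> \<rho> = 1 - pair (m_sigma nv \<sigma>) (nv \<rho>)"

definition antican_globally_generated :: "('r \<Rightarrow> int^'d) \<Rightarrow> 'r set set \<Rightarrow> bool" where
  "antican_globally_generated nv Smax \<longleftrightarrow> (\<forall>\<sigma>\<in>Smax. \<forall>\<rho>. a_coef nv \<sigma> \<rho> \<ge> 0)"

definition dual_elt :: "('r \<Rightarrow> int^'d) \<Rightarrow> 'r set \<Rightarrow> 'r \<Rightarrow> int^'d" where
  "dual_elt nv \<sigma> \<rho>' = (THE m. \<forall>\<rho>\<in>\<sigma>. pair m (nv \<rho>) = (if \<rho> = \<rho>' then 1 else 0))"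

definition XD0 :: "('r::finite \<Rightarrow> int^'d) \<Rightarrow> 'r set \<Rightarrow> ('r \<Rightarrow> nat) \<Rightarrow> real" where
  "XD0 nv \<sigma> X = (\<Prod>\<rho>\<in>UNIV. real (X \<rho>) powr real_of_int (a_coef nv \<sigma> \<rho>))"

definition XE :: "('r::finite \<Rightarrow> int^'d) \<Rightarrow> 'r set \<Rightarrow> 'r \<Rightarrow> ('r \<Rightarrow> nat) \<Rightarrow> real" where
  "XE nv \<sigma> \<rho>' X = (\<Prod>\<rho>\<in>UNIV - \<sigma>. real (X \<rho>) powr real_of_int (- pair (dual_elt nv \<sigma> \<rho>') (nv \<rho>)))"

definition Acal :: "('r::finite \<Rightarrow> int^'d) \<Rightarrow> 'r set set \<Rightarrow> real \<Rightarrow> ('r \<Rightarrow> nat) set" where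
  "Acal nv Smax B = {X. (\<forall>\<rho>. X \<rho> \<ge> 1) \<and> Max ((\<lambda>\<sigma>. XD0 nv \<sigma> X) ` Smax) \<le> B}"

definition Aflat :: "('r::finite \<Rightarrow> int^'d) \<Rightarrow> 'r set set \<Rightarrow> real \<Rightarrow> real \<Rightarrow> ('r \<Rightarrow> nat) set" where
  "Aflat nv Smax A B = {X \<in> Acal nv Smax B.
      \<forall>\<sigma>\<in>Smax. \<forall>\<rho>'\<in>\<sigma>. XE nv \<sigma> \<rho>' X \<ge> (ln B) powr A}"

definition pic_rank :: "('r::finite \<Rightarrow> int^'d) \<Rightarrow> nat" where
  "pic_rank nv = CARD('r) - CARD('d)"

end

theory Submission
  imports Defs "HOL-Real_Asymp.Real_Asymp"
begin


lemma pair_sum_right: "pair m (\<Sum>i\<in>S. f i) = (\<Sum>i\<in>S. pair m (f i))"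
  unfolding pair_def by (simp add: sum_component sum_distrib_left) (rule sum.swap)

lemma pair_scale_right: "pair m (c *s v) = c * pair m v"
  unfolding pair_def by (simp add: sum_distrib_left algebra_simps)

lemma pair_diff_left: "pair (m1 - m2) v = pair m1 v - pair m2 v"
  unfolding pair_def by (simp add: sum_subtractf algebra_simps)

lemma pair_axis: "pair m (axis i 1) = m $ i"
  unfolding pair_def axis_def by (simp add: if_distrib cong: if_cong)

lemma vec_expand_int: "(v::int^'d) = (\<Sum>i\<in>UNIV. v $ i *s axis i 1)"
  by (simp add: vec_eq_iff sum_component axis_def if_distrib cong: if_cong)

lemma basis_dual_exists:
  fixes nv :: "'r::finite \<Rightarrow> int^'d"
  assumes B: "is_Z_basis nv \<sigma>"
  shows "\<exists>!m. \<forall>\<rho>\<in>\<sigma>. pair m (nv \<rho>) = t \<rho>"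
proof -
  have ex: "\<forall>v::int^'d. \<exists>!c::'r \<Rightarrow> int. (\<forall>\<rho>. \<rho> \<notin> \<sigma> \<longrightarrow> c \<rho> = 0) \<and>
          v = (\<Sum>\<rho>\<in>\<sigma>. c \<rho> *s nv \<rho>)" using B unfolding is_Z_basis_def by blast
  define coef where "coef i = (THE c. (\<forall>\<rho>. \<rho> \<notin> \<sigma> \<longrightarrow> c \<rho> = 0) \<and>
          (axis i 1::int^'d) = (\<Sum>\<rho>\<in>\<sigma>. c \<rho> *s nv \<rho>))" for i
  have coef: "(\<forall>\<rho>. \<rho> \<notin> \<sigma> \<longrightarrow> coef i \<rho> = 0) \<and> (axis i 1::int^'d) = (\<Sum>\<rho>\<in>\<sigma>. coef i \<rho> *s nv \<rho>)" for i
    unfolding coef_def using theI'[OF ex[rule_format, of "axis i 1"]] .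
  have KF: "(\<Sum>i\<in>UNIV. (nv \<rho>)$i * coef i \<tau>) = (if \<tau> = \<rho> then 1 else 0)" if "\<rho> \<in> \<sigma>" for \<rho> \<tau>
  proof -
    define c1 where "c1 = (\<lambda>\<tau>. if \<tau> = \<rho> then 1 else (0::int))"
    define c2 where "c2 = (\<lambda>\<tau>. \<Sum>i\<in>UNIV. (nv \<rho>)$i * coef i \<tau>)"
    have "(\<Sum>\<tau>\<in>\<sigma>. c1 \<tau> *s nv \<tau>) = (\<Sum>\<tau>\<in>\<sigma>. if \<tau> = \<rho> then nv \<tau> else 0)"
      by (rule sum.cong) (auto simp: c1_def)
    also have "\<dots> = nv \<rho>" using that by (simp add: sum.delta')
    finally have 1: "(\<forall>\<tau>. \<tau> \<notin> \<sigma> \<longrightarrow> c1 \<tau> = 0) \<and> nv \<rho> = (\<Sum>\<tau>\<in>\<sigma>. c1 \<tau> *s nv \<tau>)"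
      using that by (auto simp: c1_def)
    have "(\<Sum>\<tau>\<in>\<sigma>. c2 \<tau> *s nv \<tau>) = (\<Sum>\<tau>\<in>\<sigma>. \<Sum>i\<in>UNIV. ((nv \<rho>)$i * coef i \<tau>) *s nv \<tau>)"
      unfolding c2_def by (simp add: vec_eq_iff sum_component sum_distrib_right)
    also have "\<dots> = (\<Sum>i\<in>UNIV. (nv \<rho>)$i *s (\<Sum>\<tau>\<in>\<sigma>. coef i \<tau> *s nv \<tau>))"
      by (subst sum.swap) (simp add: vec_eq_iff sum_component sum_distrib_left mult.assoc)
    also have "\<dots> = (\<Sum>i\<in>UNIV. (nv \<rho>)$i *s axis i 1)" using coef by metis
    also have "\<dots> = nv \<rho>" by (rule vec_expand_int[symmetric])
    finally have 2: "(\<forall>\<tau>. \<tau> \<notin> \<sigma> \<longrightarrow> c2 \<tau> = 0) \<and> nv \<rho> = (\<Sum>\<tau>\<in>\<sigma>. c2 \<tau> *s nv \<tau>)"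
      using coef by (auto simp: c2_def)
    from ex[rule_format, of "nv \<rho>"] 1 2 have "c1 = c2" by blast
    then show ?thesis unfolding c1_def c2_def by (metis (mono_tags))
  qed
  define m where "m = (\<chi> i. \<Sum>\<tau>\<in>\<sigma>. coef i \<tau> * t \<tau>)"
  have "pair m (nv \<rho>) = t \<rho>" if "\<rho> \<in> \<sigma>" for \<rho>
  proof -
    have "pair m (nv \<rho>) = (\<Sum>i\<in>UNIV. \<Sum>\<tau>\<in>\<sigma>. t \<tau> * ((nv \<rho>)$i * coef i \<tau>))"
      unfolding pair_def m_def by (simp add: sum_distrib_left mult_ac)
    also have "\<dots> = (\<Sum>\<tau>\<in>\<sigma>. t \<tau> * (\<Sum>i\<in>UNIV. (nv \<rho>)$i * coef i \<tau>))"
      by (subst sum.swap) (simp add: sum_distrib_left)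
    also have "\<dots> = (\<Sum>\<tau>\<in>\<sigma>. t \<tau> * (if \<tau> = \<rho> then 1 else 0))" using KF[OF that] by simp
    also have "\<dots> = t \<rho>" using that by (simp add: if_distrib cong: if_cong)
    finally show ?thesis .
  qed
  moreover have "m1 = m2" if "\<forall>\<rho>\<in>\<sigma>. pair m1 (nv \<rho>) = t \<rho>" "\<forall>\<rho>\<in>\<sigma>. pair m2 (nv \<rho>) = t \<rho>" for m1 m2
  proof -
    have "(m1 - m2) $ i = 0" for i
    proof -
      have "(m1 - m2) $ i = pair (m1 - m2) (\<Sum>\<rho>\<in>\<sigma>. coef i \<rho> *s nv \<rho>)"
        using coef[of i] pair_axis[of "m1 - m2" i] by metis
      also have "\<dots> = 0" using that
        by (simp add: pair_sum_right pair_scale_right pair_diff_left)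
      finally show ?thesis .
    qed
    then show ?thesis by (simp add: vec_eq_iff)
  qed
  ultimately show ?thesis by blast
qed



context
  fixes nv :: "'r::finite \<Rightarrow> int^'d" and Smax :: "'r set set"
  assumes fan: "complete_regular_fan nv Smax"
begin

lemma basis_of: "\<sigma> \<in> Smax \<Longrightarrow> is_Z_basis nv \<sigma>"
  using fan unfolding complete_regular_fan_def by blast

lemma mprop: "\<sigma> \<in> Smax \<Longrightarrow> \<rho> \<in> \<sigma> \<Longrightarrow> pair (m_sigma nv \<sigma>) (nv \<rho>) = 1"
  unfolding m_sigma_def using theI'[OF basis_dual_exists[OF basis_of, of \<sigma> "\<lambda>_. 1"]] by blast

lemma dprop: "\<sigma> \<in> Smax \<Longrightarrow> \<rho> \<in> \<sigma> \<Longrightarrow>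
   pair (dual_elt nv \<sigma> \<rho>') (nv \<rho>) = (if \<rho> = \<rho>' then 1 else 0)"
  unfolding dual_elt_def
  using theI'[OF basis_dual_exists[OF basis_of, of \<sigma> "\<lambda>\<rho>. if \<rho> = \<rho>' then 1 else 0"]] by blast

lemma a_coef_in: "\<sigma> \<in> Smax \<Longrightarrow> \<rho> \<in> \<sigma> \<Longrightarrow> a_coef nv \<sigma> \<rho> = 0"
  unfolding a_coef_def using mprop by simp

lemma decomp:
  fixes v :: "int^'d"
  shows "\<exists>\<tau>\<in>Smax. \<exists>c::'r\<Rightarrow>nat. (\<forall>\<rho>. \<rho> \<notin> \<tau> \<longrightarrow> c \<rho> = 0) \<and> v = (\<Sum>\<rho>\<in>UNIV. int (c \<rho>) *s nv \<rho>)"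
proof -
  have "realv v \<in> (\<Union>\<sigma>\<in>Smax. cone_of nv \<sigma>)" using fan unfolding complete_regular_fan_def by simp
  then obtain \<tau> cr where \<tau>: "\<tau> \<in> Smax" and cr: "\<forall>\<rho>\<in>\<tau>. cr \<rho> \<ge> 0"
    and rv: "realv v = (\<Sum>\<rho>\<in>\<tau>. cr \<rho> *\<^sub>R realv (nv \<rho>))"
    unfolding cone_of_def by blast
  obtain ci where ci0: "\<forall>\<rho>. \<rho> \<notin> \<tau> \<longrightarrow> ci \<rho> = 0" and civ: "v = (\<Sum>\<rho>\<in>\<tau>. ci \<rho> *s nv \<rho>)"
    using basis_of[OF \<tau>] unfolding is_Z_basis_def by blast
  have nonneg: "ci \<rho>' \<ge> 0" if "\<rho>' \<in> \<tau>" for \<rho>'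
  proof -
    define m where "m = dual_elt nv \<tau> \<rho>'"
    define rp where "rp x = (\<Sum>i\<in>UNIV. real_of_int (m$i) * x$i)" for x :: "real^'d"
    have rpv: "rp (realv w) = real_of_int (pair m w)" for w
      unfolding rp_def realv_def pair_def by simp
    have "real_of_int (pair m v) = rp (\<Sum>\<rho>\<in>\<tau>. cr \<rho> *\<^sub>R realv (nv \<rho>))" using rv rpv by metis
    also have "\<dots> = (\<Sum>\<rho>\<in>\<tau>. cr \<rho> * rp (realv (nv \<rho>)))"
      unfolding rp_def by (simp add: sum_component sum_distrib_left mult_ac) (rule sum.swap)
    also have "\<dots> = (\<Sum>\<rho>\<in>\<tau>. cr \<rho> * (if \<rho> = \<rho>' then 1 else 0))"
      by (rule sum.cong) (auto simp: rpv m_def dprop[OF \<tau>])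
    also have "\<dots> = cr \<rho>'" using that by (simp add: if_distrib cong: if_cong)
    finally have 1: "real_of_int (pair m v) = cr \<rho>'" .
    have "pair m v = (\<Sum>\<rho>\<in>\<tau>. ci \<rho> * (if \<rho> = \<rho>' then 1 else 0))"
      unfolding civ pair_sum_right pair_scale_right
      by (rule sum.cong) (auto simp: m_def dprop[OF \<tau>])
    also have "\<dots> = ci \<rho>'" using that by (simp add: if_distrib cong: if_cong)
    finally show ?thesis using 1 cr that by (metis of_int_0_le_iff)
  qed
  define c where "c \<rho> = nat (ci \<rho>)" for \<rho>
  have "(\<Sum>\<rho>\<in>UNIV. int (c \<rho>) *s nv \<rho>) = (\<Sum>\<rho>\<in>UNIV. ci \<rho> *s nv \<rho>)"
    by (rule sum.cong) (use nonneg ci0 in \<open>force simp: c_def\<close>)+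
  also have "\<dots> = (\<Sum>\<rho>\<in>\<tau>. ci \<rho> *s nv \<rho>)"
    by (rule sum.mono_neutral_right) (use ci0 in auto)
  finally show ?thesis using \<tau> ci0 civ by (intro bexI[OF _ \<tau>] exI[of _ c]) (auto simp: c_def)
qed

end


definition piv :: "('r::finite \<Rightarrow> int^'d) \<Rightarrow> ('r \<Rightarrow> int) \<Rightarrow> int^'d" where
  "piv nv y = (\<Sum>\<rho>\<in>UNIV. y \<rho> *s nv \<rho>)"

definition ell :: "('r::finite \<Rightarrow> int^'d) \<Rightarrow> 'r set \<Rightarrow> ('r \<Rightarrow> int) \<Rightarrow> int" where
  "ell nv \<sigma> y = (\<Sum>\<rho>\<in>UNIV. a_coef nv \<sigma> \<rho> * y \<rho>)"

definition ev :: "('r::finite \<Rightarrow> int^'d) \<Rightarrow> 'r set \<Rightarrow> 'r \<Rightarrow> 'r \<Rightarrow> int" where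
  "ev nv \<sigma>0 \<rho>0 \<rho> = - pair (dual_elt nv \<sigma>0 \<rho>0) (nv \<rho>)"

definition fv :: "('r::finite \<Rightarrow> int^'d) \<Rightarrow> 'r set \<Rightarrow> 'r \<Rightarrow> ('r \<Rightarrow> int) \<Rightarrow> int" where
  "fv nv \<sigma>0 \<rho>0 y = (\<Sum>\<rho>\<in>UNIV - \<sigma>0. ev nv \<sigma>0 \<rho>0 \<rho> * y \<rho>)"

lemma pair_piv: "pair m (piv nv y) = (\<Sum>\<rho>\<in>UNIV. y \<rho> * pair m (nv \<rho>))"
  unfolding piv_def pair_sum_right pair_scale_right ..

lemma piv_add: "piv nv (\<lambda>\<rho>. a \<rho> + b \<rho>) = piv nv a + piv nv b"
  unfolding piv_def by (simp add: vector_sadd_rdistrib sum.distrib)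

lemma piv_diff: "piv nv (\<lambda>\<rho>. a \<rho> - b \<rho>) = piv nv a - piv nv b"
  unfolding piv_def by (simp add: vec_eq_iff sum_component sum_subtractf algebra_simps)

lemma ell_eq: "ell nv \<sigma> y = sum y UNIV - pair (m_sigma nv \<sigma>) (piv nv y)"
  unfolding ell_def pair_piv a_coef_def by (simp add: algebra_simps sum_subtractf)

lemma sum_split_set: "sum (g::'r::finite \<Rightarrow> 'b::comm_monoid_add) UNIV = sum g S + sum g (UNIV - S)"
  by (metis add.commute finite subset_UNIV sum.subset_diff)

context
  fixes nv :: "'r::finite \<Rightarrow> int^'d" and Smax :: "'r set set"
  assumes fan: "complete_regular_fan nv Smax"
begin

lemma fv_eq: assumes "\<sigma>0 \<in> Smax" "\<rho>0 \<in> \<sigma>0"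
  shows "fv nv \<sigma>0 \<rho>0 y = y \<rho>0 - pair (dual_elt nv \<sigma>0 \<rho>0) (piv nv y)"
proof -
  have "pair (dual_elt nv \<sigma>0 \<rho>0) (piv nv y) =
     (\<Sum>\<rho>\<in>\<sigma>0. y \<rho> * pair (dual_elt nv \<sigma>0 \<rho>0) (nv \<rho>)) + (\<Sum>\<rho>\<in>UNIV - \<sigma>0. y \<rho> * pair (dual_elt nv \<sigma>0 \<rho>0) (nv \<rho>))"
    unfolding pair_piv by (rule sum_split_set)
  also have "(\<Sum>\<rho>\<in>\<sigma>0. y \<rho> * pair (dual_elt nv \<sigma>0 \<rho>0) (nv \<rho>)) = (\<Sum>\<rho>\<in>\<sigma>0. if \<rho> = \<rho>0 then y \<rho> else 0)"
    by (rule sum.cong) (auto simp: dprop[OF fan assms(1)])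
  also have "\<dots> = y \<rho>0" using assms by (simp add: sum.delta')
  finally show ?thesis unfolding fv_def ev_def by (simp add: algebra_simps sum_negf)
qed

lemma fv0: "\<sigma>0 \<in> Smax \<Longrightarrow> \<rho>0 \<in> \<sigma>0 \<Longrightarrow> piv nv w = 0 \<Longrightarrow> fv nv \<sigma>0 \<rho>0 w = w \<rho>0"
  using fv_eq by (simp add: pair_def)

lemma inj_piv: assumes "\<sigma>0 \<in> Smax" "piv nv d = 0" "\<forall>\<rho>. \<rho> \<notin> \<sigma>0 \<longrightarrow> d \<rho> = 0"
  shows "d = (\<lambda>_. 0)"
proof
  fix \<rho>
  show "d \<rho> = 0"
  proof (cases "\<rho> \<in> \<sigma>0")
    case True
    have "0 = pair (dual_elt nv \<sigma>0 \<rho>) (piv nv d)" using assms by (simp add: pair_def)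
    also have "\<dots> = (\<Sum>\<tau>\<in>UNIV. if \<tau> = \<rho> then d \<tau> else 0)"
      unfolding pair_piv
    proof (rule sum.cong)
      fix x assume "x \<in> (UNIV::'r set)"
      show "d x * pair (dual_elt nv \<sigma>0 \<rho>) (nv x) = (if x = \<rho> then d x else 0)"
        by (cases "x \<in> \<sigma>0") (use assms dprop[OF fan assms(1)] True in auto)
    qed simp
    also have "\<dots> = d \<rho>" by simp
    finally show ?thesis by simp
  qed (use assms in auto)
qed

lemma kl: "\<exists>\<tau>\<in>Smax. \<exists>c::'r\<Rightarrow>nat. (\<forall>\<rho>. \<rho> \<notin> \<tau> \<longrightarrow> c \<rho> = 0) \<and> piv nv (\<lambda>\<rho>. k \<rho> + int (c \<rho>)) = 0"
proof -
  obtain \<tau> c where "\<tau> \<in> Smax" "\<forall>\<rho>. \<rho> \<notin> \<tau> \<longrightarrow> c \<rho> = (0::nat)"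
    "- piv nv k = (\<Sum>\<rho>\<in>UNIV. int (c \<rho>) *s nv \<rho>)"
    using decomp[OF fan, of "- piv nv k"] by blast
  moreover from this(3) have "piv nv k + piv nv (\<lambda>\<rho>. int (c \<rho>)) = 0"
    unfolding piv_def by (metis add.right_inverse)
  ultimately show ?thesis unfolding piv_add by blast
qed

lemma ell_tau: assumes "\<tau> \<in> Smax" "\<forall>\<rho>. \<rho> \<notin> \<tau> \<longrightarrow> c \<rho> = 0"
   "piv nv (\<lambda>\<rho>. k \<rho> + c \<rho>) = 0"
 shows "ell nv \<tau> k = sum k UNIV + sum c UNIV"
proof -
  have "piv nv k = - piv nv c" using assms(3) unfolding piv_add by (simp add: eq_neg_iff_add_eq_0)
  moreover have "pair (m_sigma nv \<tau>) (piv nv c) = sum c UNIV"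
    unfolding pair_piv by (rule sum.cong) (use assms mprop[OF fan assms(1)] in auto)
  ultimately show ?thesis unfolding ell_eq pair_def by (simp add: sum_negf)
qed

lemma ell0: "piv nv w = 0 \<Longrightarrow> ell nv \<sigma> w = sum w UNIV"
  unfolding ell_eq by (simp add: pair_def)

lemma ell_out: "\<sigma> \<in> Smax \<Longrightarrow> ell nv \<sigma> y = (\<Sum>\<rho>\<in>UNIV - \<sigma>. a_coef nv \<sigma> \<rho> * y \<rho>)"
  unfolding ell_def using sum_split_set[of "\<lambda>\<rho>. a_coef nv \<sigma> \<rho> * y \<rho>" \<sigma>]
  by (simp add: a_coef_in[OF fan])

end


definition kbox :: "('r::finite \<Rightarrow> nat) \<Rightarrow> ('r \<Rightarrow> nat) set" where
  "kbox k = {X. \<forall>\<rho>. 2^(k \<rho>) \<le> X \<rho> \<and> X \<rho> < 2^(k \<rho> + 1)}"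

definition kfun :: "('r::finite \<Rightarrow> nat) \<Rightarrow> 'r \<Rightarrow> nat" where
  "kfun X \<rho> = (SOME k. 2^k \<le> X \<rho> \<and> X \<rho> < 2^(k+1))"

lemma kfun: "\<forall>\<rho>. X \<rho> \<ge> 1 \<Longrightarrow> X \<in> kbox (kfun X)"
  unfolding kbox_def kfun_def
proof (intro CollectI allI)
  fix \<rho> assume "\<forall>\<rho>. X \<rho> \<ge> 1"
  then have "\<exists>k. 2^k \<le> X \<rho> \<and> X \<rho> < 2^(k+1)" using ex_power_ivl1[of 2 "X \<rho>"] by auto
  then show "2 ^ (SOME k. 2 ^ k \<le> X \<rho> \<and> X \<rho> < 2 ^ (k + 1)) \<le> X \<rho> \<and>
        X \<rho> < 2 ^ ((SOME k. 2 ^ k \<le> X \<rho> \<and> X \<rho> < 2 ^ (k + 1)) + 1)" by (rule someI_ex)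
qed

lemma card_box: "card (kbox k) = 2 ^ (sum k UNIV)"
proof -
  have "kbox k = PiE UNIV (\<lambda>\<rho>. {2^(k \<rho>)..<2^(k \<rho>+1)})"
    unfolding kbox_def PiE_def extensional_def by auto
  then have "card (kbox k) = (\<Prod>\<rho>\<in>UNIV. card {2^(k \<rho>)..<(2::nat)^(k \<rho>+1)})"
    by (simp add: card_PiE)
  also have "\<dots> = (\<Prod>\<rho>\<in>UNIV. 2 ^ k \<rho>)" by simp
  also have "\<dots> = 2 ^ sum k UNIV" by (simp add: power_sum)
  finally show ?thesis .
qed

lemma finite_box: "finite (kbox k)"
proof -
  have "kbox k \<subseteq> PiE UNIV (\<lambda>\<rho>. {..<2^(k \<rho>+1)})"
    unfolding kbox_def PiE_def extensional_def by auto
  then show ?thesis by (rule finite_subset) (auto intro: finite_PiE)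
qed

lemma factor_lower:
  fixes x k :: nat and e :: int
  assumes "2^k \<le> x" "x < 2^(k+1)"
  shows "2 powr (real k * e - \<bar>e\<bar>) \<le> real x powr e"
proof (cases "e \<ge> 0")
  case True
  have "2 powr (real k * e - \<bar>e\<bar>) \<le> 2 powr (real k * e)" using True by simp
  also have "\<dots> = (2 powr real k) powr e" by (simp add: powr_powr)
  also have "\<dots> \<le> real x powr e"
  proof (rule powr_mono2)
    have "2 powr real k = real ((2::nat)^k)" by (simp add: powr_realpow)
    also have "\<dots> \<le> real x" using assms(1) by linarith
    finally show "2 powr real k \<le> real x" .
  qed (use True in auto)
  finally show ?thesis .
next
  case False
  have "2 powr (real k * e - \<bar>e\<bar>) = (2 powr real (k+1)) powr e"
    using False by (simp add: powr_powr algebra_simps)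
  also have "\<dots> \<le> real x powr e"
  proof (rule powr_mono2')
    have "(0::nat) < 2^k" by simp
    then show "0 < real x" using assms(1) by linarith
    have "real x \<le> real ((2::nat)^(k+1))" using assms(2) by linarith
    also have "\<dots> = 2 powr real (k + 1)" by (subst powr_realpow) auto
    finally show "real x \<le> 2 powr real (k + 1)" .
  qed (use False in auto)
  finally show ?thesis .
qed



lemma factor_lower0:
  fixes x k :: nat and e :: real
  assumes "2^k \<le> x" "e \<ge> 0"
  shows "2 powr (real k * e) \<le> real x powr e"
proof -
  have "2 powr (real k * e) = (2 powr real k) powr e" by (simp add: powr_powr)
  also have "\<dots> \<le> real x powr e"
  proof (rule powr_mono2)
    have "2 powr real k = real ((2::nat)^k)" by (simp add: powr_realpow)
    also have "\<dots> \<le> real x" using assms(1) by linarith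
    finally show "2 powr real k \<le> real x" .
  qed (use assms in auto)
  finally show ?thesis .
qed

definition kint :: "('r \<Rightarrow> nat) \<Rightarrow> 'r \<Rightarrow> int" where "kint k = (\<lambda>\<rho>. int (k \<rho>))"

lemma finite_fun_le: "finite {k::'r::finite\<Rightarrow>nat. \<forall>\<rho>. k \<rho> \<le> N}"
proof -
  have "{k::'r\<Rightarrow>nat. \<forall>\<rho>. k \<rho> \<le> N} = PiE UNIV (\<lambda>_. {0..N})"
    unfolding PiE_def extensional_def by auto
  then show ?thesis by (simp add: finite_PiE)
qed

lemma card_fun_le: "card {k::'r::finite\<Rightarrow>nat. \<forall>\<rho>. k \<rho> \<le> N} = (N+1) ^ CARD('r)"
proof -
  have "{k::'r\<Rightarrow>nat. \<forall>\<rho>. k \<rho> \<le> N} = PiE UNIV (\<lambda>_. {0..N})"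
    unfolding PiE_def extensional_def by auto
  then show ?thesis by (simp add: card_PiE)
qed

definition "C0 nv \<sigma>0 \<rho>0 = (\<Sum>\<rho>\<in>UNIV - \<sigma>0. real_of_int \<bar>ev nv \<sigma>0 \<rho>0 \<rho>\<bar>)"

definition "Kset nv Smax \<sigma>0 \<rho>0 T L' = {k. (\<forall>\<rho>. k \<rho> \<le> nat \<lfloor>T\<rfloor>) \<and>
    (\<forall>\<sigma>\<in>Smax. real_of_int (ell nv \<sigma> (kint k)) \<le> T) \<and> real_of_int (fv nv \<sigma>0 \<rho>0 (kint k)) < L'}"

lemma finite_Kset: "finite (Kset nv Smax \<sigma>0 \<rho>0 T L')"
  by (rule finite_subset[OF _ finite_fun_le[of "nat \<lfloor>T\<rfloor>"]]) (auto simp: Kset_def)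

lemma XE_lower: assumes "X \<in> kbox k"
  shows "2 powr (real_of_int (fv nv \<sigma>0 \<rho>0 (kint k)) - C0 nv \<sigma>0 \<rho>0) \<le> XE nv \<sigma>0 \<rho>0 X"
proof -
  have "2 powr (real_of_int (fv nv \<sigma>0 \<rho>0 (kint k)) - C0 nv \<sigma>0 \<rho>0) =
     (\<Prod>\<rho>\<in>UNIV - \<sigma>0. 2 powr (real (k \<rho>) * real_of_int (ev nv \<sigma>0 \<rho>0 \<rho>) - real_of_int \<bar>ev nv \<sigma>0 \<rho>0 \<rho>\<bar>))"
    unfolding fv_def kint_def C0_def by (simp add: powr_sum sum_subtractf[symmetric] mult_ac)
  also have "\<dots> \<le> XE nv \<sigma>0 \<rho>0 X" unfolding XE_def
  proof (rule prod_mono)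
    fix i assume "i \<in> UNIV - \<sigma>0"
    have "2^k i \<le> X i" "X i < 2^(k i + 1)" using assms by (auto simp: kbox_def)
    from factor_lower[OF this, of "ev nv \<sigma>0 \<rho>0 i"]
    show "0 \<le> 2 powr (real (k i) * real_of_int (ev nv \<sigma>0 \<rho>0 i) - real_of_int \<bar>ev nv \<sigma>0 \<rho>0 i\<bar>) \<and>
      2 powr (real (k i) * real_of_int (ev nv \<sigma>0 \<rho>0 i) - real_of_int \<bar>ev nv \<sigma>0 \<rho>0 i\<bar>)
        \<le> real (X i) powr real_of_int (- pair (dual_elt nv \<sigma>0 \<rho>0) (nv i))"
      by (simp add: ev_def)
  qed
  finally show ?thesis .
qed

context
  fixes nv :: "'r::finite \<Rightarrow> int^'d" and Smax :: "'r set set"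
  assumes fan: "complete_regular_fan nv Smax"
    and gg: "antican_globally_generated nv Smax"
begin

lemma finite_Smax: "finite Smax" by (rule finite_subset[of _ UNIV]) auto

lemma Smax_ne: "Smax \<noteq> {}"
  using fan unfolding complete_regular_fan_def by blast

lemma XD0_lower: assumes "\<sigma> \<in> Smax" "X \<in> kbox k"
  shows "2 powr real_of_int (ell nv \<sigma> (kint k)) \<le> XD0 nv \<sigma> X"
proof -
  have "2 powr real_of_int (ell nv \<sigma> (kint k)) = (\<Prod>\<rho>\<in>UNIV. 2 powr (real (k \<rho>) * real_of_int (a_coef nv \<sigma> \<rho>)))"
    unfolding ell_def kint_def by (simp add: powr_sum mult_ac)
  also have "\<dots> \<le> XD0 nv \<sigma> X" unfolding XD0_def
    by (rule prod_mono) (use assms gg in \<open>auto simp: kbox_def antican_globally_generated_def intro!: factor_lower0\<close>)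
  finally show ?thesis .
qed

lemma XD0_pos: "\<forall>\<rho>. X \<rho> \<ge> 1 \<Longrightarrow> XD0 nv \<sigma> X > 0"
  unfolding XD0_def by (rule prod_pos) (auto simp: Suc_le_eq)


lemma Acal_props: assumes "X \<in> Acal nv Smax B"
  shows "B > 0 \<and> X \<in> kbox (kfun X) \<and> (\<forall>\<sigma>\<in>Smax. real_of_int (ell nv \<sigma> (kint (kfun X))) \<le> log 2 B)
     \<and> (\<forall>\<rho>. kfun X \<rho> \<le> nat \<lfloor>log 2 B\<rfloor>)"
proof -
  have X1: "\<forall>\<rho>. X \<rho> \<ge> 1" and MB: "Max ((\<lambda>\<sigma>. XD0 nv \<sigma> X) ` Smax) \<le> B"
    using assms unfolding Acal_def by auto
  have le: "XD0 nv \<sigma> X \<le> B" if "\<sigma> \<in> Smax" for \<sigma>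
  proof -
    have "XD0 nv \<sigma> X \<le> Max ((\<lambda>\<sigma>. XD0 nv \<sigma> X) ` Smax)"
      by (rule Max_ge) (use finite_Smax that in auto)
    then show ?thesis using MB by linarith
  qed
  obtain \<sigma>1 where "\<sigma>1 \<in> Smax" using Smax_ne by auto
  with le XD0_pos[OF X1] have Bpos: "B > 0" by (meson less_le_trans)
  have bx: "X \<in> kbox (kfun X)" by (rule kfun[OF X1])
  have ellb: "real_of_int (ell nv \<sigma> (kint (kfun X))) \<le> log 2 B" if "\<sigma> \<in> Smax" for \<sigma>
  proof -
    have "2 powr real_of_int (ell nv \<sigma> (kint (kfun X))) \<le> B"
      using XD0_lower[OF that bx] le[OF that] by linarith
    then have "log 2 (2 powr real_of_int (ell nv \<sigma> (kint (kfun X)))) \<le> log 2 B"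
      by (subst log_le_cancel_iff) (use Bpos in auto)
    then show ?thesis by simp
  qed
  obtain \<tau> c where \<tau>: "\<tau> \<in> Smax" "\<forall>\<rho>. \<rho> \<notin> \<tau> \<longrightarrow> c \<rho> = 0"
    "piv nv (\<lambda>\<rho>. kint (kfun X) \<rho> + int (c \<rho>)) = 0"
    using kl[OF fan, of "kint (kfun X)"] by blast
  have et: "ell nv \<tau> (kint (kfun X)) = sum (kint (kfun X)) UNIV + sum (\<lambda>\<rho>. int (c \<rho>)) UNIV"
    by (rule ell_tau[OF fan \<tau>(1)]) (use \<tau> in auto)
  have "kfun X \<rho> \<le> nat \<lfloor>log 2 B\<rfloor>" for \<rho>
  proof -
    have "int (kfun X \<rho>) \<le> sum (kint (kfun X)) UNIV"
      unfolding kint_def by (rule member_le_sum) auto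
    also have "\<dots> \<le> ell nv \<tau> (kint (kfun X))" unfolding et by (simp add: sum_nonneg)
    finally have "real (kfun X \<rho>) \<le> log 2 B" using ellb[OF \<tau>(1)] by linarith
    then show ?thesis by linarith
  qed
  then show ?thesis using Bpos bx ellb by blast
qed

lemma finite_Acal: "finite (Acal nv Smax B)"
proof (rule finite_subset)
  show "Acal nv Smax B \<subseteq> (\<Union>k\<in>{k. \<forall>\<rho>. k \<rho> \<le> nat \<lfloor>log 2 B\<rfloor>}. kbox k)"
    using Acal_props by blast
  show "finite (\<Union>k\<in>{k::'r\<Rightarrow>nat. \<forall>\<rho>. k \<rho> \<le> nat \<lfloor>log 2 B\<rfloor>}. kbox k)"
    using finite_fun_le finite_box by blast
qed

lemma card_Bad:
  assumes s0: "\<sigma>0 \<in> Smax" and r0: "\<rho>0 \<in> \<sigma>0" and L: "L > 0"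
  shows "real (card {X \<in> Acal nv Smax B. XE nv \<sigma>0 \<rho>0 X < L}) \<le>
     (\<Sum>k\<in>Kset nv Smax \<sigma>0 \<rho>0 (log 2 B) (log 2 L + C0 nv \<sigma>0 \<rho>0). 2 ^ sum k UNIV)"
proof -
  let ?K = "Kset nv Smax \<sigma>0 \<rho>0 (log 2 B) (log 2 L + C0 nv \<sigma>0 \<rho>0)"
  have sub: "{X \<in> Acal nv Smax B. XE nv \<sigma>0 \<rho>0 X < L} \<subseteq> (\<Union>k\<in>?K. kbox k)"
  proof
    fix X assume X: "X \<in> {X \<in> Acal nv Smax B. XE nv \<sigma>0 \<rho>0 X < L}"
    note P = Acal_props[of X B]
    have "2 powr (real_of_int (fv nv \<sigma>0 \<rho>0 (kint (kfun X))) - C0 nv \<sigma>0 \<rho>0) < L"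
      using XE_lower[of X "kfun X" nv \<sigma>0 \<rho>0] P X by auto
    then have "log 2 (2 powr (real_of_int (fv nv \<sigma>0 \<rho>0 (kint (kfun X))) - C0 nv \<sigma>0 \<rho>0)) < log 2 L"
      by (subst log_less_cancel_iff) (use L in auto)
    then have "real_of_int (fv nv \<sigma>0 \<rho>0 (kint (kfun X))) < log 2 L + C0 nv \<sigma>0 \<rho>0" by simp
    then have "kfun X \<in> ?K" using P X unfolding Kset_def by auto
    then show "X \<in> (\<Union>k\<in>?K. kbox k)" using P X by auto
  qed
  have "card {X \<in> Acal nv Smax B. XE nv \<sigma>0 \<rho>0 X < L} \<le> card (\<Union>k\<in>?K. kbox k)"
    by (rule card_mono[OF _ sub]) (use finite_Kset finite_box in blast)
  also have "\<dots> \<le> (\<Sum>k\<in>?K. card (kbox k))" by (rule card_UN_le[OF finite_Kset])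
  finally have "card {X \<in> Acal nv Smax B. XE nv \<sigma>0 \<rho>0 X < L} \<le> (\<Sum>k\<in>?K. (2::nat) ^ sum k UNIV)"
    by (simp add: card_box)
  then have "real (card {X \<in> Acal nv Smax B. XE nv \<sigma>0 \<rho>0 X < L}) \<le> real (\<Sum>k\<in>?K. (2::nat) ^ sum k UNIV)"
    by linarith
  then show ?thesis by simp
qed

end


lemma ell_diff: "ell nv \<sigma> (\<lambda>\<rho>. a \<rho> - b \<rho>) = ell nv \<sigma> a - ell nv \<sigma> b"
  unfolding ell_def by (simp add: sum_subtractf algebra_simps)
lemma fv_diff: "fv nv \<sigma> \<rho>0 (\<lambda>\<rho>. a \<rho> - b \<rho>) = fv nv \<sigma> \<rho>0 a - fv nv \<sigma> \<rho>0 b"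
  unfolding fv_def by (simp add: sum_subtractf algebra_simps)
lemma fv_add: "fv nv \<sigma> \<rho>0 (\<lambda>\<rho>. a \<rho> + b \<rho>) = fv nv \<sigma> \<rho>0 a + fv nv \<sigma> \<rho>0 b"
  unfolding fv_def by (simp add: sum.distrib algebra_simps)

lemma two_by_two:
  fixes a1 a2 e1 e2 x y :: int
  assumes "a1 * x + a2 * y = 0" "e1 * x + e2 * y = 0" "a1 * e2 \<noteq> a2 * e1"
  shows "x = 0 \<and> y = 0"
proof -
  have "x * (a1 * e2 - a2 * e1) = e2 * (a1 * x + a2 * y) - a2 * (e1 * x + e2 * y)" by algebra
  then have "x * (a1 * e2 - a2 * e1) = 0" using assms by simp
  then have x: "x = 0" using assms(3) by simp
  have "y * (a1 * e2 - a2 * e1) = a1 * (e1 * x + e2 * y) - e1 * (a1 * x + a2 * y)" by algebra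
  then have "y * (a1 * e2 - a2 * e1) = 0" using assms by simp
  then have "y = 0" using assms(3) by simp
  with x show ?thesis by simp
qed

lemma sum_two_support:
  fixes h :: "'r::finite \<Rightarrow> int"
  assumes "i \<in> U" "j \<in> U" "i \<noteq> j" "\<forall>\<rho>\<in>U - {i, j}. h \<rho> = 0"
  shows "sum h U = h i + h j"
proof -
  have "sum h U = sum h {i, j}"
    by (rule sum.mono_neutral_right) (use assms in auto)
  then show ?thesis using assms by simp
qed

context
  fixes nv :: "'r::finite \<Rightarrow> int^'d" and Smax :: "'r set set" and \<sigma>0 \<rho>0
  assumes fan: "complete_regular_fan nv Smax" and s0: "\<sigma>0 \<in> Smax" and r0: "\<rho>0 \<in> \<sigma>0"
begin

lemma fiber_card:
  assumes ij: "i \<notin> \<sigma>0" "j \<notin> \<sigma>0"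
    "a_coef nv \<sigma>0 i * ev nv \<sigma>0 \<rho>0 j \<noteq> a_coef nv \<sigma>0 j * ev nv \<sigma>0 \<rho>0 i"
  and F: "\<forall>k\<in>F. piv nv (\<lambda>\<rho>. int (k \<rho> + c \<rho>)) = 0 \<and> sum (\<lambda>\<rho>. k \<rho> + c \<rho>) UNIV = s \<and> k \<rho>0 + c \<rho>0 = t"
  shows "card F \<le> (s+1) ^ card ((UNIV - \<sigma>0) - {i, j})"
proof -
  let ?S = "(UNIV - \<sigma>0) - {i, j}"
  have ij': "i \<noteq> j" using ij(3) by auto
  let ?f = "\<lambda>k. restrict (\<lambda>\<rho>. k \<rho> + c \<rho>) ?S"
  have "inj_on ?f F"
  proof (rule inj_onI)
    fix k1 k2 assume k1: "k1 \<in> F" and k2: "k2 \<in> F" and eq: "?f k1 = ?f k2"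
    define d where "d = (\<lambda>\<rho>. int (k1 \<rho> + c \<rho>) - int (k2 \<rho> + c \<rho>))"
    have pd: "piv nv d = 0" unfolding d_def piv_diff using F k1 k2 by simp
    have dS: "d \<rho> = 0" if "\<rho> \<in> ?S" for \<rho>
      using fun_cong[OF eq, of \<rho>] that by (simp add: d_def)
    have "ell nv \<sigma>0 d = ell nv \<sigma>0 (\<lambda>\<rho>. int (k1 \<rho> + c \<rho>)) - ell nv \<sigma>0 (\<lambda>\<rho>. int (k2 \<rho> + c \<rho>))"
      unfolding d_def by (rule ell_diff)
    also have "\<dots> = 0" using F k1 k2 ell0[OF fan] by (simp del: of_nat_add)
        (metis of_nat_sum)
    finally have "(\<Sum>\<rho>\<in>UNIV - \<sigma>0. a_coef nv \<sigma>0 \<rho> * d \<rho>) = 0" using ell_out[OF fan s0] by simp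
    then have e1: "a_coef nv \<sigma>0 i * d i + a_coef nv \<sigma>0 j * d j = 0"
      using sum_two_support[of i "UNIV - \<sigma>0" j "\<lambda>\<rho>. a_coef nv \<sigma>0 \<rho> * d \<rho>"] ij ij' dS by auto
    have "fv nv \<sigma>0 \<rho>0 d = fv nv \<sigma>0 \<rho>0 (\<lambda>\<rho>. int (k1 \<rho> + c \<rho>)) - fv nv \<sigma>0 \<rho>0 (\<lambda>\<rho>. int (k2 \<rho> + c \<rho>))"
      unfolding d_def by (rule fv_diff)
    also have "\<dots> = 0"
    proof -
      have "k1 \<rho>0 + c \<rho>0 = t" "k2 \<rho>0 + c \<rho>0 = t" using F k1 k2 by auto
      moreover have "fv nv \<sigma>0 \<rho>0 (\<lambda>\<rho>. int (k1 \<rho> + c \<rho>)) = int (k1 \<rho>0 + c \<rho>0)"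
        by (rule fv0[OF fan s0 r0]) (use F k1 in auto)
      moreover have "fv nv \<sigma>0 \<rho>0 (\<lambda>\<rho>. int (k2 \<rho> + c \<rho>)) = int (k2 \<rho>0 + c \<rho>0)"
        by (rule fv0[OF fan s0 r0]) (use F k2 in auto)
      ultimately show ?thesis by simp
    qed
    finally have "(\<Sum>\<rho>\<in>UNIV - \<sigma>0. ev nv \<sigma>0 \<rho>0 \<rho> * d \<rho>) = 0" unfolding fv_def .
    then have e2: "ev nv \<sigma>0 \<rho>0 i * d i + ev nv \<sigma>0 \<rho>0 j * d j = 0"
      using sum_two_support[of i "UNIV - \<sigma>0" j "\<lambda>\<rho>. ev nv \<sigma>0 \<rho>0 \<rho> * d \<rho>"] ij ij' dS by auto
    have "d i = 0 \<and> d j = 0" by (rule two_by_two[OF e1 e2 ij(3)])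
    then have "\<forall>\<rho>. \<rho> \<notin> \<sigma>0 \<longrightarrow> d \<rho> = 0" using dS by blast
    from inj_piv[OF fan s0 pd this] have "d = (\<lambda>_. 0)" .
    then show "k1 = k2" unfolding d_def by (auto simp: fun_eq_iff dest: fun_cong)
  qed
  moreover have "?f ` F \<subseteq> PiE ?S (\<lambda>_. {0..s})"
  proof
    fix x assume "x \<in> ?f ` F"
    then obtain k where k: "k \<in> F" and x: "x = ?f k" by blast
    have "k \<rho> + c \<rho> \<le> s" for \<rho>
      using F k member_le_sum[of \<rho> UNIV "\<lambda>\<rho>. k \<rho> + c \<rho>"] by auto
    then show "x \<in> PiE ?S (\<lambda>_. {0..s})" unfolding x by auto
  qed
  ultimately have "card F \<le> card (PiE ?S (\<lambda>_. {0..s}))"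
    by (intro card_inj_on_le) (auto intro: finite_PiE)
  also have "\<dots> = (s+1) ^ card ?S" by (simp add: card_PiE)
  finally show ?thesis .
qed

end


lemma geo2: "(\<Sum>s\<in>{0..N}. (2::real)^s) = 2^(N+1) - 1"
  by (induction N) simp_all

lemma H1: "(\<Sum>s\<in>{0..N}. (real s + 1)^p * (2::real)^s) \<le> (real N + 1)^p * 2^(N+1)"
proof -
  have "(\<Sum>s\<in>{0..N}. (real s + 1)^p * (2::real)^s) \<le> (\<Sum>s\<in>{0..N}. (real N + 1)^p * (2::real)^s)"
    by (rule sum_mono) (auto intro!: mult_right_mono power_mono)
  also have "\<dots> = (real N + 1)^p * (2^(N+1) - 1)" by (simp add: sum_distrib_left[symmetric] geo2)
  also have "\<dots> \<le> (real N + 1)^p * 2^(N+1)" by (simp add: mult_left_mono)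
  finally show ?thesis .
qed

lemma H2aux: "1 + real m \<le> 2 * (3/2)^m"
proof (induction m)
  case 0 then show ?case by simp
next
  case (Suc m)
  have "(1::real) \<le> (3/2)^m" by (rule one_le_power) simp
  moreover have "(2::real) * (3/2)^Suc m = 3 * (3/2)^m" by simp
  ultimately show ?case using Suc by (simp only:)
qed

lemma H2: "(1 + real m) / 2^m \<le> 2 * (3/4::real)^m"
proof -
  have "(3/4::real)^m * 2^m = (3/2)^m" by (simp flip: power_mult_distrib)
  then have "2 * (3/4::real)^m * 2^m = 2 * (3/2)^m" by simp
  then show ?thesis using H2aux[of m] by (simp add: divide_le_eq)
qed

lemma geo34: "(\<Sum>y\<in>{0..N}. (3/4::real)^y) \<le> 4"
proof -
  have "{0..N} = {..<Suc N}" by auto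
  then have "(\<Sum>y\<in>{0..N}. (3/4::real)^y) = (1 - (3/4)^Suc N) / (1 - 3/4)"
    by (simp add: sum_gp_strict)
  also have "\<dots> \<le> 4" by simp
  finally show ?thesis .
qed

lemma H3: "(\<Sum>c\<in>{c::'r::finite\<Rightarrow>nat. \<forall>\<rho>. c \<rho> \<le> N}. (3/4::real)^(sum c UNIV)) \<le> 4 ^ CARD('r)"
proof -
  have eq: "{c::'r\<Rightarrow>nat. \<forall>\<rho>. c \<rho> \<le> N} = PiE UNIV (\<lambda>_. {0..N})"
    unfolding PiE_def extensional_def by auto
  have "(\<Sum>c\<in>{c::'r\<Rightarrow>nat. \<forall>\<rho>. c \<rho> \<le> N}. (3/4::real)^(sum c UNIV)) =
     (\<Sum>c\<in>PiE UNIV (\<lambda>_. {0..N}). \<Prod>x\<in>(UNIV::'r set). (3/4::real)^(c x))"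
    unfolding eq by (simp add: power_sum)
  also have "\<dots> = (\<Prod>x\<in>(UNIV::'r set). \<Sum>y\<in>{0..N}. (3/4::real)^y)"
    by (rule prod_sum_PiE[symmetric]) auto
  also have "\<dots> \<le> (\<Prod>x\<in>(UNIV::'r set). 4)"
    by (rule prod_mono) (auto intro: sum_nonneg geo34)
  finally show ?thesis by simp
qed



context
  fixes nv :: "'r::finite \<Rightarrow> int^'d" and Smax :: "'r set set" and \<sigma>0 \<rho>0
  assumes fan: "complete_regular_fan nv Smax" and s0: "\<sigma>0 \<in> Smax" and r0: "\<rho>0 \<in> \<sigma>0"
begin

lemma tc_exists: "\<exists>TC. \<forall>k::'r\<Rightarrow>nat. fst (TC k) \<in> Smax \<and> (\<forall>\<rho>. \<rho> \<notin> fst (TC k) \<longrightarrow> snd (TC k) \<rho> = 0)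
   \<and> piv nv (\<lambda>\<rho>. int (k \<rho> + snd (TC k) \<rho>)) = 0"
proof -
  have "\<forall>k::'r\<Rightarrow>nat. \<exists>p. fst p \<in> Smax \<and> (\<forall>\<rho>. \<rho> \<notin> fst p \<longrightarrow> snd p \<rho> = 0)
   \<and> piv nv (\<lambda>\<rho>. int (k \<rho> + snd p \<rho>)) = 0"
  proof
    fix k :: "'r\<Rightarrow>nat"
    obtain \<tau> c where "\<tau> \<in> Smax" "\<forall>\<rho>. \<rho> \<notin> \<tau> \<longrightarrow> c \<rho> = 0" "piv nv (\<lambda>\<rho>. int (k \<rho>) + int (c \<rho>)) = 0"
      using kl[OF fan, of "\<lambda>\<rho>. int (k \<rho>)"] by blast
    then show "\<exists>p. fst p \<in> Smax \<and> (\<forall>\<rho>. \<rho> \<notin> fst p \<longrightarrow> snd p \<rho> = 0)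
      \<and> piv nv (\<lambda>\<rho>. int (k \<rho> + snd p \<rho>)) = 0" by (intro exI[of _ "(\<tau>, c)"]) auto
  qed
  then show ?thesis by (rule choice)
qed

lemma tc_props:
  assumes TC: "\<forall>k::'r\<Rightarrow>nat. fst (TC k) \<in> Smax \<and> (\<forall>\<rho>. \<rho> \<notin> fst (TC k) \<longrightarrow> snd (TC k) \<rho> = 0)
   \<and> piv nv (\<lambda>\<rho>. int (k \<rho> + snd (TC k) \<rho>)) = 0"
  and k: "k \<in> Kset nv Smax \<sigma>0 \<rho>0 T L'"
  shows "sum (\<lambda>\<rho>. k \<rho> + snd (TC k) \<rho>) UNIV \<le> nat \<lfloor>T\<rfloor>"
    "real (k \<rho>0 + snd (TC k) \<rho>0) < L' + C0 nv \<sigma>0 \<rho>0 * real (sum (snd (TC k)) UNIV)"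
proof -
  let ?c = "snd (TC k)" and ?\<tau> = "fst (TC k)"
  have el: "ell nv ?\<tau> (kint k) = sum (kint k) UNIV + sum (\<lambda>\<rho>. int (?c \<rho>)) UNIV"
    by (rule ell_tau[OF fan]) (use TC in \<open>auto simp: kint_def\<close>)
  have "real_of_int (ell nv ?\<tau> (kint k)) \<le> T" using k TC unfolding Kset_def by auto
  then have "real (sum (\<lambda>\<rho>. k \<rho> + ?c \<rho>) UNIV) \<le> T" using el by (simp add: kint_def sum.distrib)
  then show "sum (\<lambda>\<rho>. k \<rho> + ?c \<rho>) UNIV \<le> nat \<lfloor>T\<rfloor>" by linarith
  have f0: "fv nv \<sigma>0 \<rho>0 (\<lambda>\<rho>. int (k \<rho> + ?c \<rho>)) = int (k \<rho>0 + ?c \<rho>0)"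
    by (rule fv0[OF fan s0 r0]) (use TC in auto)
  have fa: "fv nv \<sigma>0 \<rho>0 (\<lambda>\<rho>. int (k \<rho> + ?c \<rho>)) = fv nv \<sigma>0 \<rho>0 (kint k) + fv nv \<sigma>0 \<rho>0 (\<lambda>\<rho>. int (?c \<rho>))"
    unfolding kint_def by (simp add: fv_add)
  have "real_of_int (fv nv \<sigma>0 \<rho>0 (\<lambda>\<rho>. int (?c \<rho>))) = (\<Sum>\<rho>\<in>UNIV - \<sigma>0. real_of_int (ev nv \<sigma>0 \<rho>0 \<rho>) * real (?c \<rho>))"
    unfolding fv_def by simp
  also have "\<dots> \<le> (\<Sum>\<rho>\<in>UNIV - \<sigma>0. real_of_int \<bar>ev nv \<sigma>0 \<rho>0 \<rho>\<bar> * real (sum ?c UNIV))"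
  proof (rule sum_mono)
    fix \<rho>
    have "?c \<rho> \<le> sum ?c UNIV" by (rule member_le_sum) auto
    then have "real (?c \<rho>) \<le> real (sum ?c UNIV)" by (simp only: of_nat_le_iff)
    then show "real_of_int (ev nv \<sigma>0 \<rho>0 \<rho>) * real (?c \<rho>) \<le> real_of_int \<bar>ev nv \<sigma>0 \<rho>0 \<rho>\<bar> * real (sum ?c UNIV)"
      by (smt (verit) mult_left_mono mult_right_mono of_int_abs of_nat_0_le_iff abs_ge_self abs_ge_zero)
  qed
  also have "\<dots> = C0 nv \<sigma>0 \<rho>0 * real (sum ?c UNIV)" unfolding C0_def by (simp add: sum_distrib_right)
  finally have "real_of_int (fv nv \<sigma>0 \<rho>0 (\<lambda>\<rho>. int (?c \<rho>))) \<le> C0 nv \<sigma>0 \<rho>0 * real (sum ?c UNIV)" .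
  moreover have "real_of_int (fv nv \<sigma>0 \<rho>0 (kint k)) < L'" using k unfolding Kset_def by auto
  ultimately show "real (k \<rho>0 + ?c \<rho>0) < L' + C0 nv \<sigma>0 \<rho>0 * real (sum ?c UNIV)"
    using f0 fa by (smt (verit) of_int_add of_int_of_nat_eq)
qed

end


lemma C0_nonneg: "C0 nv \<sigma>0 \<rho>0 \<ge> 0"
  unfolding C0_def by (rule sum_nonneg) simp

context
  fixes nv :: "'r::finite \<Rightarrow> int^'d" and Smax :: "'r set set" and \<sigma>0 \<rho>0
  assumes fan: "complete_regular_fan nv Smax" and s0: "\<sigma>0 \<in> Smax" and r0: "\<rho>0 \<in> \<sigma>0"
begin

lemma generic_sum:
  assumes ij: "i \<notin> \<sigma>0" "j \<notin> \<sigma>0"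
    "a_coef nv \<sigma>0 i * ev nv \<sigma>0 \<rho>0 j \<noteq> a_coef nv \<sigma>0 j * ev nv \<sigma>0 \<rho>0 i"
  and L: "L' \<ge> 0"
  shows "(\<Sum>k\<in>Kset nv Smax \<sigma>0 \<rho>0 T L'. (2::real)^sum k UNIV) \<le>
    real (card Smax) * (2 * 4^CARD('r) * (L' + C0 nv \<sigma>0 \<rho>0 + 1)) *
      ((real (nat \<lfloor>T\<rfloor>) + 1)^card ((UNIV - \<sigma>0) - {i, j}) * 2^(nat \<lfloor>T\<rfloor>+1))"
proof -
  obtain TC where TC: "\<forall>k::'r\<Rightarrow>nat. fst (TC k) \<in> Smax \<and> (\<forall>\<rho>. \<rho> \<notin> fst (TC k) \<longrightarrow> snd (TC k) \<rho> = 0)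
   \<and> piv nv (\<lambda>\<rho>. int (k \<rho> + snd (TC k) \<rho>)) = 0" using tc_exists[OF fan s0 r0] by blast
  define N where "N = nat \<lfloor>T\<rfloor>"
  define K where "K = Kset nv Smax \<sigma>0 \<rho>0 T L'"
  define Cs where "Cs = {c::'r\<Rightarrow>nat. \<forall>\<rho>. c \<rho> \<le> N}"
  define C where "C = C0 nv \<sigma>0 \<rho>0"
  define M where "M c = nat \<lfloor>L' + C * real (sum c UNIV)\<rfloor>" for c :: "'r\<Rightarrow>nat"
  define g where "g k = ((fst (TC k), snd (TC k)), (sum (\<lambda>\<rho>. k \<rho> + snd (TC k) \<rho>) UNIV, k \<rho>0 + snd (TC k) \<rho>0))"
    for k :: "'r\<Rightarrow>nat"
  define Bf where "Bf x = {0..N} \<times> {0..M (snd x)}" for x :: "'r set \<times> ('r\<Rightarrow>nat)"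
  define I where "I = Sigma (Smax \<times> Cs) Bf"
  define p where "p = card ((UNIV - \<sigma>0) - {i, j})"
  define G where "G x y = (real (fst y) + 1)^p * 2^(fst y) / 2^(sum (snd x) UNIV)"
    for x :: "'r set \<times> ('r\<Rightarrow>nat)" and y :: "nat \<times> nat"
  have C0: "C \<ge> 0" unfolding C_def by (rule C0_nonneg)
  have finCs: "finite Cs" unfolding Cs_def by (rule finite_fun_le)
  have finI: "finite I" unfolding I_def Bf_def
    by (rule finite_SigmaI) (use finite_Smax[OF fan] finCs in auto)
  have finK: "finite K" unfolding K_def by (rule finite_Kset)
  have gI: "g ` K \<subseteq> I"
  proof
    fix x assume "x \<in> g ` K"
    then obtain k where k: "k \<in> K" and x: "x = g k" by blast
    note tp = tc_props[OF fan s0 r0 TC k[unfolded K_def]]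
    have "snd (TC k) \<rho> \<le> N" for \<rho>
    proof -
      have "snd (TC k) \<rho> \<le> k \<rho> + snd (TC k) \<rho>" by simp
      also have "\<dots> \<le> sum (\<lambda>\<rho>. k \<rho> + snd (TC k) \<rho>) UNIV" by (rule member_le_sum) auto
      finally show ?thesis using tp(1) N_def by linarith
    qed
    moreover have "k \<rho>0 + snd (TC k) \<rho>0 \<le> M (snd (TC k))"
      using tp(2) unfolding M_def C_def by linarith
    moreover have "fst (TC k) \<in> Smax" using TC by blast
    ultimately show "x \<in> I" using tp(1) unfolding x g_def I_def Bf_def Cs_def N_def
      by (simp add: mem_Times_iff)
  qed
  have "(\<Sum>k\<in>K. (2::real)^sum k UNIV) = (\<Sum>y\<in>I. \<Sum>k\<in>{k\<in>K. g k = y}. (2::real)^sum k UNIV)"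
    by (rule sum.group[symmetric, OF finK finI gI])
  also have "\<dots> \<le> (\<Sum>y\<in>I. case_prod G y)"
  proof (rule sum_mono)
    fix y assume yI: "y \<in> I"
    obtain \<tau> c s t where y: "y = ((\<tau>, c), (s, t))" by (metis prod.exhaust)
    let ?F = "{k\<in>K. g k = y}"
    have Fp: "\<forall>k\<in>?F. piv nv (\<lambda>\<rho>. int (k \<rho> + c \<rho>)) = 0 \<and> sum (\<lambda>\<rho>. k \<rho> + c \<rho>) UNIV = s \<and> k \<rho>0 + c \<rho>0 = t"
    proof
      fix k assume "k \<in> ?F"
      then have "TC k = (\<tau>, c)" "s = sum (\<lambda>\<rho>. k \<rho> + c \<rho>) UNIV" "t = k \<rho>0 + c \<rho>0"
        unfolding g_def y by auto
      moreover have "piv nv (\<lambda>\<rho>. int (k \<rho> + snd (TC k) \<rho>)) = 0" using TC by blast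
      ultimately show "piv nv (\<lambda>\<rho>. int (k \<rho> + c \<rho>)) = 0 \<and> sum (\<lambda>\<rho>. k \<rho> + c \<rho>) UNIV = s \<and> k \<rho>0 + c \<rho>0 = t"
        by simp
    qed
    have cardF: "card ?F \<le> (s+1)^p" unfolding p_def by (rule fiber_card[OF fan s0 r0 ij Fp])
    have val: "(2::real)^sum k UNIV = 2^s / 2^(sum c UNIV)" if "k \<in> ?F" for k
    proof -
      have "sum k UNIV + sum c UNIV = s" using Fp that by (simp add: sum.distrib)
      then have "(2::real)^sum k UNIV * 2^(sum c UNIV) = 2^s" by (metis power_add)
      then show ?thesis by (simp add: eq_divide_eq)
    qed
    have "(\<Sum>k\<in>?F. (2::real)^sum k UNIV) = real (card ?F) * (2^s / 2^(sum c UNIV))"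
      using val by simp
    also have "\<dots> \<le> real ((s+1)^p) * (2^s / 2^(sum c UNIV))"
    proof (rule mult_right_mono)
      show "real (card ?F) \<le> real ((s+1)^p)" using cardF by (simp only: of_nat_le_iff)
    qed simp
    also have "\<dots> = case_prod G y" unfolding y G_def by (simp add: add.commute)
    finally show "(\<Sum>k\<in>?F. (2::real)^sum k UNIV) \<le> case_prod G y" .
  qed
  also have "\<dots> = (\<Sum>x\<in>Smax \<times> Cs. sum (G x) (Bf x))"
    unfolding I_def by (rule sum.Sigma[symmetric]) (use finite_Smax[OF fan] finCs in \<open>auto simp: Bf_def\<close>)
  also have "\<dots> \<le> (\<Sum>x\<in>Smax \<times> Cs. (L' + C + 1) * 2 * (3/4)^(sum (snd x) UNIV) *
        ((real N + 1)^p * 2^(N+1)))"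
  proof (rule sum_mono)
    fix x assume "x \<in> Smax \<times> Cs"
    obtain \<tau> c where x: "x = (\<tau>, c)" by (metis prod.exhaust)
    have "sum (G x) (Bf x) = (\<Sum>(s,t)\<in>{0..N}\<times>{0..M c}. (real s + 1)^p * 2^s / 2^(sum c UNIV))"
      unfolding Bf_def x G_def by (rule sum.cong) auto
    also have "\<dots> = (\<Sum>s\<in>{0..N}. \<Sum>t\<in>{0..M c}. (real s + 1)^p * 2^s / 2^(sum c UNIV))"
      by (rule sum.cartesian_product[symmetric])
    also have "\<dots> = (\<Sum>s\<in>{0..N}. (real (M c) + 1) * ((real s + 1)^p * 2^s / 2^(sum c UNIV)))"
      by (simp add: add.commute)
    also have "\<dots> = (real (M c) + 1) * (\<Sum>s\<in>{0..N}. (real s + 1)^p * 2^s) / 2^(sum c UNIV)"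
      by (simp add: sum_distrib_left sum_divide_distrib)
    also have "\<dots> \<le> (real (M c) + 1) * ((real N + 1)^p * 2^(N+1)) / 2^(sum c UNIV)"
      by (intro divide_right_mono mult_left_mono H1) auto
    also have "\<dots> \<le> ((L' + C + 1) * (1 + real (sum c UNIV))) * ((real N + 1)^p * 2^(N+1)) / 2^(sum c UNIV)"
    proof (intro divide_right_mono mult_right_mono)
      have "real (M c) \<le> L' + C * real (sum c UNIV)"
      proof -
        have "0 \<le> C * real (sum c UNIV)" using C0 by (intro mult_nonneg_nonneg of_nat_0_le_iff)
        then have "0 \<le> L' + C * real (sum c UNIV)" using L by linarith
        then show ?thesis unfolding M_def by linarith
      qed
      moreover have "C * real (sum c UNIV) \<le> (L' + C + 1) * real (sum c UNIV)"
        by (rule mult_right_mono) (use L in linarith, rule of_nat_0_le_iff)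
      ultimately show "real (M c) + 1 \<le> (L' + C + 1) * (1 + real (sum c UNIV))"
        using C0 by (simp add: algebra_simps)
    qed auto
    also have "\<dots> = (L' + C + 1) * ((1 + real (sum c UNIV)) / 2^(sum c UNIV)) * ((real N + 1)^p * 2^(N+1))"
      by simp
    also have "\<dots> \<le> (L' + C + 1) * (2 * (3/4)^(sum c UNIV)) * ((real N + 1)^p * 2^(N+1))"
      by (intro mult_right_mono mult_left_mono H2) (use L C0 in auto)
    finally show "sum (G x) (Bf x) \<le> (L' + C + 1) * 2 * (3/4)^(sum (snd x) UNIV) * ((real N + 1)^p * 2^(N+1))"
      unfolding x by (simp only: mult_ac snd_conv)
  qed
  also have "\<dots> = real (card Smax) * ((L' + C + 1) * 2 * ((real N + 1)^p * 2^(N+1))) *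
      (\<Sum>c\<in>Cs. (3/4)^(sum c UNIV))"
  proof -
    define h where "h c = (L' + C + 1) * 2 * (3/4::real)^(sum c UNIV) * ((real N + 1)^p * 2^(N+1))"
      for c :: "'r \<Rightarrow> nat"
    have "(\<Sum>x\<in>Smax \<times> Cs. (L' + C + 1) * 2 * (3/4)^(sum (snd x) UNIV) * ((real N + 1)^p * 2^(N+1)))
       = (\<Sum>(\<tau>,c)\<in>Smax \<times> Cs. h c)" unfolding h_def by (rule sum.cong) auto
    also have "\<dots> = (\<Sum>\<tau>\<in>Smax. \<Sum>c\<in>Cs. h c)" by (rule sum.cartesian_product[symmetric])
    also have "\<dots> = real (card Smax) * (\<Sum>c\<in>Cs. h c)" by simp
    also have "(\<Sum>c\<in>Cs. h c) = ((L' + C + 1) * 2 * ((real N + 1)^p * 2^(N+1))) * (\<Sum>c\<in>Cs. (3/4)^(sum c UNIV))"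
      unfolding h_def by (simp add: sum_distrib_left mult_ac)
    finally show ?thesis by (simp only: mult_ac)
  qed
  also have "\<dots> \<le> real (card Smax) * ((L' + C + 1) * 2 * ((real N + 1)^p * 2^(N+1))) * 4^CARD('r)"
    by (intro mult_left_mono) (use H3[of N] L C0 in \<open>auto simp: Cs_def\<close>)
  finally show ?thesis unfolding K_def N_def p_def C_def by (simp only: mult_ac)
qed

end


context
  fixes nv :: "'r::finite \<Rightarrow> int^'d" and Smax :: "'r set set" and \<sigma>0 \<rho>0
  assumes fan: "complete_regular_fan nv Smax" and s0: "\<sigma>0 \<in> Smax" and r0: "\<rho>0 \<in> \<sigma>0"
begin

lemma dichotomy:
  "(\<exists>i j. i \<notin> \<sigma>0 \<and> j \<notin> \<sigma>0 \<and> a_coef nv \<sigma>0 i * ev nv \<sigma>0 \<rho>0 j \<noteq> a_coef nv \<sigma>0 j * ev nv \<sigma>0 \<rho>0 i)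
   \<or> (\<exists>\<mu>::real. \<mu> > 0 \<and> (\<forall>\<rho>. \<rho> \<notin> \<sigma>0 \<longrightarrow> real_of_int (ev nv \<sigma>0 \<rho>0 \<rho>) = \<mu> * real_of_int (a_coef nv \<sigma>0 \<rho>)))"
proof (cases "\<exists>i j. i \<notin> \<sigma>0 \<and> j \<notin> \<sigma>0 \<and> a_coef nv \<sigma>0 i * ev nv \<sigma>0 \<rho>0 j \<noteq> a_coef nv \<sigma>0 j * ev nv \<sigma>0 \<rho>0 i")
  case True then show ?thesis by blast
next
  case False
  then have ng: "\<not> (\<exists>i j. i \<notin> \<sigma>0 \<and> j \<notin> \<sigma>0 \<and> a_coef nv \<sigma>0 i * ev nv \<sigma>0 \<rho>0 j \<noteq> a_coef nv \<sigma>0 j * ev nv \<sigma>0 \<rho>0 i)" .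
  define e where "e = (\<lambda>\<rho>. if \<rho> = \<rho>0 then (1::int) else 0)"
  obtain \<tau> c where "\<tau> \<in> Smax" "\<forall>\<rho>. \<rho> \<notin> \<tau> \<longrightarrow> c \<rho> = 0" and pw: "piv nv (\<lambda>\<rho>. e \<rho> + int (c \<rho>)) = 0"
    using kl[OF fan, of e] by blast
  define w where "w = (\<lambda>\<rho>. e \<rho> + int (c \<rho>))"
  have pw': "piv nv w = 0" using pw by (simp add: w_def)
  have wnn: "w \<rho> \<ge> 0" for \<rho> by (simp add: w_def e_def)
  have w0: "w \<rho>0 \<ge> 1" by (simp add: w_def e_def)
  have "sum w UNIV \<ge> w \<rho>0" by (rule member_le_sum) (use wnn in auto)
  then have sw: "sum w UNIV \<ge> 1" using w0 by linarith
  have el: "(\<Sum>\<rho>\<in>UNIV - \<sigma>0. a_coef nv \<sigma>0 \<rho> * w \<rho>) = sum w UNIV"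
    using ell_out[OF fan s0, of w] ell0[OF fan pw'] by simp
  have fw: "(\<Sum>\<rho>\<in>UNIV - \<sigma>0. ev nv \<sigma>0 \<rho>0 \<rho> * w \<rho>) = w \<rho>0"
    using fv0[OF fan s0 r0 pw'] unfolding fv_def .
  obtain i0 where i0: "i0 \<notin> \<sigma>0" "a_coef nv \<sigma>0 i0 \<noteq> 0"
  proof -
    have "\<exists>i0\<in>UNIV - \<sigma>0. a_coef nv \<sigma>0 i0 \<noteq> 0"
    proof (rule ccontr)
      assume "\<not> ?thesis"
      then have "(\<Sum>\<rho>\<in>UNIV - \<sigma>0. a_coef nv \<sigma>0 \<rho> * w \<rho>) = 0" by simp
      then show False using el sw by simp
    qed
    then show ?thesis using that by blast
  qed
  define \<mu> where "\<mu> = real_of_int (ev nv \<sigma>0 \<rho>0 i0) / real_of_int (a_coef nv \<sigma>0 i0)"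
  have propl: "real_of_int (ev nv \<sigma>0 \<rho>0 \<rho>) = \<mu> * real_of_int (a_coef nv \<sigma>0 \<rho>)" if "\<rho> \<notin> \<sigma>0" for \<rho>
  proof -
    have "a_coef nv \<sigma>0 i0 * ev nv \<sigma>0 \<rho>0 \<rho> = a_coef nv \<sigma>0 \<rho> * ev nv \<sigma>0 \<rho>0 i0" using ng i0 that by blast
    then have "real_of_int (a_coef nv \<sigma>0 i0) * real_of_int (ev nv \<sigma>0 \<rho>0 \<rho>) = real_of_int (a_coef nv \<sigma>0 \<rho>) * real_of_int (ev nv \<sigma>0 \<rho>0 i0)"
      by (metis of_int_mult)
    then show ?thesis unfolding \<mu>_def using i0 by (simp add: field_simps)
  qed
  have "real_of_int (w \<rho>0) = (\<Sum>\<rho>\<in>UNIV - \<sigma>0. real_of_int (ev nv \<sigma>0 \<rho>0 \<rho>) * real_of_int (w \<rho>))"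
    using fw by (metis (mono_tags, lifting) of_int_mult of_int_sum sum.cong)
  also have "\<dots> = \<mu> * (\<Sum>\<rho>\<in>UNIV - \<sigma>0. real_of_int (a_coef nv \<sigma>0 \<rho>) * real_of_int (w \<rho>))"
    by (simp add: sum_distrib_left propl mult_ac)
  also have "(\<Sum>\<rho>\<in>UNIV - \<sigma>0. real_of_int (a_coef nv \<sigma>0 \<rho>) * real_of_int (w \<rho>)) = real_of_int (sum w UNIV)"
    using el by (metis (mono_tags, lifting) of_int_mult of_int_sum sum.cong)
  finally have a1: "real_of_int (w \<rho>0) = \<mu> * real_of_int (sum w UNIV)" .
  have a2: "real_of_int (w \<rho>0) \<ge> 1" using w0 by simp
  have a3: "real_of_int (sum w UNIV) \<ge> 1" using sw by (metis of_int_1 of_int_le_iff)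
  have "\<mu> > 0"
  proof (rule ccontr)
    assume "\<not> \<mu> > 0"
    then have "\<mu> * real_of_int (sum w UNIV) \<le> 0" using a3 by (intro mult_nonpos_nonneg) auto
    then show False using a1 a2 by linarith
  qed
  then have "\<exists>\<mu>::real. \<mu> > 0 \<and> (\<forall>\<rho>. \<rho> \<notin> \<sigma>0 \<longrightarrow> real_of_int (ev nv \<sigma>0 \<rho>0 \<rho>) = \<mu> * real_of_int (a_coef nv \<sigma>0 \<rho>))"
    using propl by blast
  then show ?thesis by blast
qed

lemma degen_sum:
  assumes deg: "\<forall>\<rho>. \<rho> \<notin> \<sigma>0 \<longrightarrow> real_of_int (ev nv \<sigma>0 \<rho>0 \<rho>) = \<mu> * real_of_int (a_coef nv \<sigma>0 \<rho>)"
    and lam: "\<mu> > 0"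
  defines "Am \<equiv> 1 + (\<Sum>\<rho>\<in>UNIV. real_of_int \<bar>a_coef nv \<sigma>0 \<rho>\<bar>)"
  shows "(\<Sum>k\<in>Kset nv Smax \<sigma>0 \<rho>0 T L'. (2::real)^sum k UNIV) \<le>
     (real (nat \<lfloor>T\<rfloor>) + 1)^CARD('r) * 2 powr ((1 - 1/Am) * T + L' / (\<mu> * Am))"
proof -
  obtain TC where TC: "\<forall>k::'r\<Rightarrow>nat. fst (TC k) \<in> Smax \<and> (\<forall>\<rho>. \<rho> \<notin> fst (TC k) \<longrightarrow> snd (TC k) \<rho> = 0)
   \<and> piv nv (\<lambda>\<rho>. int (k \<rho> + snd (TC k) \<rho>)) = 0" using tc_exists[OF fan s0 r0] by blast
  have Am1: "Am \<ge> 1" unfolding Am_def by (simp add: sum_nonneg)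
  have ale: "real_of_int (a_coef nv \<sigma>0 \<rho>) \<le> Am" for \<rho>
  proof -
    have "real_of_int \<bar>a_coef nv \<sigma>0 \<rho>\<bar> \<le> (\<Sum>\<rho>\<in>UNIV. real_of_int \<bar>a_coef nv \<sigma>0 \<rho>\<bar>)"
      by (rule member_le_sum) auto
    then show ?thesis unfolding Am_def by linarith
  qed
  let ?K = "Kset nv Smax \<sigma>0 \<rho>0 T L'"
  have each: "(2::real)^sum k UNIV \<le> 2 powr ((1 - 1/Am) * T + L' / (\<mu> * Am))" if k: "k \<in> ?K" for k
  proof -
    let ?c = "snd (TC k)" and ?\<tau> = "fst (TC k)"
    define w where "w = (\<lambda>\<rho>. int (k \<rho> + ?c \<rho>))"
    have pw: "piv nv w = 0" using TC unfolding w_def by blast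
    have el: "ell nv ?\<tau> (kint k) = sum (kint k) UNIV + sum (\<lambda>\<rho>. int (?c \<rho>)) UNIV"
      by (rule ell_tau[OF fan]) (use TC in \<open>auto simp: kint_def\<close>)
    have "real_of_int (ell nv ?\<tau> (kint k)) \<le> T" using k TC unfolding Kset_def by auto
    then have sT: "real (sum k UNIV) + real (sum ?c UNIV) \<le> T" using el by (simp add: kint_def)
    have fvl: "real_of_int (fv nv \<sigma>0 \<rho>0 y) = \<mu> * real_of_int (ell nv \<sigma>0 y)" for y
    proof -
      have "real_of_int (fv nv \<sigma>0 \<rho>0 y) = (\<Sum>\<rho>\<in>UNIV - \<sigma>0. real_of_int (ev nv \<sigma>0 \<rho>0 \<rho>) * real_of_int (y \<rho>))"
        unfolding fv_def by simp
      also have "\<dots> = \<mu> * (\<Sum>\<rho>\<in>UNIV - \<sigma>0. real_of_int (a_coef nv \<sigma>0 \<rho>) * real_of_int (y \<rho>))"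
        by (simp add: sum_distrib_left deg mult_ac)
      also have "\<dots> = \<mu> * real_of_int (ell nv \<sigma>0 y)" unfolding ell_out[OF fan s0] by simp
      finally show ?thesis .
    qed
    have "\<mu> * real_of_int (ell nv \<sigma>0 (kint k)) < L'" using k fvl unfolding Kset_def by auto
    then have ek: "real_of_int (ell nv \<sigma>0 (kint k)) < L' / \<mu>" using lam by (simp add: field_simps)
    have "ell nv \<sigma>0 (kint k) = ell nv \<sigma>0 w - ell nv \<sigma>0 (\<lambda>\<rho>. int (?c \<rho>))"
      using ell_diff[of nv \<sigma>0 w "\<lambda>\<rho>. int (?c \<rho>)"] unfolding w_def kint_def by simp
    also have "ell nv \<sigma>0 w = sum (kint k) UNIV + sum (\<lambda>\<rho>. int (?c \<rho>)) UNIV"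
      using ell0[OF fan pw] unfolding w_def kint_def by (simp add: sum.distrib)
    finally have e2: "real_of_int (ell nv \<sigma>0 (kint k)) = real (sum k UNIV) + real (sum ?c UNIV) - real_of_int (ell nv \<sigma>0 (\<lambda>\<rho>. int (?c \<rho>)))"
      by (simp add: kint_def)
    have "real_of_int (ell nv \<sigma>0 (\<lambda>\<rho>. int (?c \<rho>))) = (\<Sum>\<rho>\<in>UNIV. real_of_int (a_coef nv \<sigma>0 \<rho>) * real (?c \<rho>))"
      unfolding ell_def by simp
    also have "\<dots> \<le> (\<Sum>\<rho>\<in>UNIV. Am * real (?c \<rho>))"
      by (rule sum_mono) (use ale in \<open>auto intro: mult_right_mono\<close>)
    also have "\<dots> = Am * real (sum ?c UNIV)" by (simp add: sum_distrib_left)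
    finally have e3: "real_of_int (ell nv \<sigma>0 (\<lambda>\<rho>. int (?c \<rho>))) \<le> Am * real (sum ?c UNIV)" .
    define S where "S = real (sum k UNIV)"
    define Cc where "Cc = real (sum ?c UNIV)"
    have h1: "S + Cc \<le> T" using sT unfolding S_def Cc_def .
    have h2: "S + Cc - Am * Cc < L' / \<mu>" using ek e2 e3 unfolding S_def Cc_def by linarith
    have "S * Am \<le> (Am - 1) * T + L' / \<mu>"
    proof -
      have "S * Am = (Am - 1) * (S + Cc) + (S + Cc - Am * Cc)" by (simp add: algebra_simps)
      also have "\<dots> \<le> (Am - 1) * T + L' / \<mu>"
        using h1 h2 Am1 by (intro add_mono mult_left_mono) auto
      finally show ?thesis .
    qed
    then have "S \<le> ((Am - 1) * T + L' / \<mu>) / Am" using Am1 by (simp add: field_simps)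
    also have "\<dots> = (1 - 1/Am) * T + L' / (\<mu> * Am)" using Am1 by (simp add: field_simps)
    finally have "S \<le> (1 - 1/Am) * T + L' / (\<mu> * Am)" .
    then have "2 powr S \<le> 2 powr ((1 - 1/Am) * T + L' / (\<mu> * Am))" by simp
    moreover have "(2::real)^sum k UNIV = 2 powr S" unfolding S_def by (rule powr_realpow[symmetric]) simp
    ultimately show ?thesis by simp
  qed
  have "(\<Sum>k\<in>?K. (2::real)^sum k UNIV) \<le> (\<Sum>k\<in>?K. 2 powr ((1 - 1/Am) * T + L' / (\<mu> * Am)))"
    by (rule sum_mono) (rule each)
  also have "\<dots> = real (card ?K) * 2 powr ((1 - 1/Am) * T + L' / (\<mu> * Am))" by simp
  also have "\<dots> \<le> (real (nat \<lfloor>T\<rfloor>) + 1)^CARD('r) * 2 powr ((1 - 1/Am) * T + L' / (\<mu> * Am))"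
  proof (rule mult_right_mono)
    have "card ?K \<le> card {k::'r\<Rightarrow>nat. \<forall>\<rho>. k \<rho> \<le> nat \<lfloor>T\<rfloor>}"
      by (rule card_mono[OF finite_fun_le]) (auto simp: Kset_def)
    then have "card ?K \<le> (nat \<lfloor>T\<rfloor> + 1)^CARD('r)" by (simp add: card_fun_le)
    then have "real (card ?K) \<le> real ((nat \<lfloor>T\<rfloor> + 1)^CARD('r))" by (simp only: of_nat_le_iff)
    then show "real (card ?K) \<le> (real (nat \<lfloor>T\<rfloor>) + 1)^CARD('r)" by (simp add: add.commute)
  qed simp
  finally show ?thesis .
qed

end


lemma bigo_dom:
  assumes "eventually (\<lambda>B. 0 \<le> f B \<and> f B \<le> h B) at_top" "h \<in> O[at_top](g)"
  shows "(f :: real \<Rightarrow> real) \<in> O[at_top](g)"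
proof -
  have "f \<in> O[at_top](h)"
    by (rule bigoI[of _ 1]) (use assms(1) in \<open>auto elim!: eventually_mono\<close>)
  then show ?thesis using assms(2) by (rule landau_o.big_trans)
qed

lemma asymp_generic:
  "(\<lambda>B::real. K1 * (K2 * (A * (ln (ln B) / ln 2) + K3)) * ((ln B / ln 2 + 1)^p * (2 * B)))
     \<in> O[at_top](\<lambda>B. B * ln B powr real p * ln (ln B))"
  by real_asymp

lemma asymp_degen:
  assumes "e > 0"
  shows "(\<lambda>B::real. (ln B / ln 2 + 1)^n * B powr (1 - e) * ln B powr q * K)
     \<in> O[at_top](\<lambda>B. B * ln B powr r * ln (ln B))"
  using assms by real_asymp

lemma two_powr_log: "x > 0 \<Longrightarrow> 2 powr (log 2 x * c) = x powr c"
  by (simp add: powr_powr[symmetric])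

lemma nat_floor_pow_le:
  assumes "T \<ge> 0"
  shows "(real (nat \<lfloor>T\<rfloor>) + 1)^p \<le> (T + 1)^p" and "(2::real)^(nat \<lfloor>T\<rfloor>) \<le> 2 powr T"
proof -
  have le: "real (nat \<lfloor>T\<rfloor>) \<le> T" using assms by linarith
  then show "(real (nat \<lfloor>T\<rfloor>) + 1)^p \<le> (T + 1)^p" by (intro power_mono) auto
  have "(2::real)^(nat \<lfloor>T\<rfloor>) = 2 powr real (nat \<lfloor>T\<rfloor>)" by (simp add: powr_realpow)
  also have "\<dots> \<le> 2 powr T" using le by simp
  finally show "(2::real)^(nat \<lfloor>T\<rfloor>) \<le> 2 powr T" .
qed

context
  fixes nv :: "'r::finite \<Rightarrow> int^'d" and Smax :: "'r set set" and A :: real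
  assumes fan: "complete_regular_fan nv Smax" and gg: "antican_globally_generated nv Smax" and A: "A > 0"
begin

lemma bad_bigo:
  assumes s0: "\<sigma>0 \<in> Smax" and r0: "\<rho>0 \<in> \<sigma>0"
  shows "(\<lambda>B. real (card {X \<in> Acal nv Smax B. XE nv \<sigma>0 \<rho>0 X < ln B powr A}))
     \<in> O[at_top](\<lambda>B. B * ln B powr (real (pic_rank nv) - 2) * ln (ln B))"
proof -
  define C where "C = C0 nv \<sigma>0 \<rho>0"
  have C0: "C \<ge> 0" unfolding C_def by (rule C0_nonneg)
  define Lp where "Lp B = log 2 (ln B powr A) + C" for B :: real
  have Lp: "Lp B = A * (ln (ln B) / ln 2) + C" if "B > 1" for B
    using that unfolding Lp_def by (simp add: log_powr log_def)
  have base: "real (card {X \<in> Acal nv Smax B. XE nv \<sigma>0 \<rho>0 X < ln B powr A}) \<le>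
     (\<Sum>k\<in>Kset nv Smax \<sigma>0 \<rho>0 (log 2 B) (Lp B). 2 ^ sum k UNIV)" if "B > 1" for B
    unfolding Lp_def C_def by (rule card_Bad[OF fan gg s0 r0]) (use that in simp)
  have cs: "card \<sigma>0 = CARD('d)" using basis_of[OF fan s0] unfolding is_Z_basis_def by simp
  have cout: "card (UNIV - \<sigma>0) = pic_rank nv"
    unfolding pic_rank_def by (simp add: card_Diff_subset cs)
  from dichotomy[OF fan s0 r0] show ?thesis
  proof
    assume "\<exists>i j. i \<notin> \<sigma>0 \<and> j \<notin> \<sigma>0 \<and> a_coef nv \<sigma>0 i * ev nv \<sigma>0 \<rho>0 j \<noteq> a_coef nv \<sigma>0 j * ev nv \<sigma>0 \<rho>0 i"
    then obtain i j where ij: "i \<notin> \<sigma>0" "j \<notin> \<sigma>0"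
      "a_coef nv \<sigma>0 i * ev nv \<sigma>0 \<rho>0 j \<noteq> a_coef nv \<sigma>0 j * ev nv \<sigma>0 \<rho>0 i" by blast
    have ij': "i \<noteq> j" using ij(3) by auto
    define p where "p = card ((UNIV - \<sigma>0) - {i, j})"
    have "p = card (UNIV - \<sigma>0) - 2" unfolding p_def using ij ij' by (subst card_Diff_subset) auto
    moreover have "card (UNIV - \<sigma>0) \<ge> card {i, j}" by (rule card_mono) (use ij in auto)
    ultimately have rp: "real p = real (pic_rank nv) - 2" using cout ij' by simp
    define h where "h B = real (card Smax) * (2 * 4^CARD('r) * (A * (ln (ln B) / ln 2) + (2 * C + 1))) *
       ((ln B / ln 2 + 1)^p * (2 * B))" for B
    have "eventually (\<lambda>B. 0 \<le> real (card {X \<in> Acal nv Smax B. XE nv \<sigma>0 \<rho>0 X < ln B powr A}) \<and>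
        real (card {X \<in> Acal nv Smax B. XE nv \<sigma>0 \<rho>0 X < ln B powr A}) \<le> h B) at_top"
      using eventually_ge_at_top[of "exp 1"]
    proof eventually_elim
      case (elim B)
      have B1: "B > 1" using elim by (smt (verit) exp_gt_one zero_less_one)
      have lnB: "ln B \<ge> 1" using elim by (metis exp_gt_zero ln_exp ln_le_cancel_iff order_less_le_trans zero_less_one)
      have T0: "log 2 B \<ge> 0" using B1 by simp
      have llB: "ln (ln B) \<ge> 0" using lnB by simp
      have nn: "0 \<le> A * ln (ln B) / ln 2" using A llB by simp
      have Lp0: "Lp B \<ge> 0" using Lp[OF B1] llB A C0 by (simp add: mult_nonneg_nonneg)
      have "real (card {X \<in> Acal nv Smax B. XE nv \<sigma>0 \<rho>0 X < ln B powr A}) \<le>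
        real (card Smax) * (2 * 4^CARD('r) * (Lp B + C + 1)) *
        ((real (nat \<lfloor>log 2 B\<rfloor>) + 1)^p * 2^(nat \<lfloor>log 2 B\<rfloor>+1))"
        using base[OF B1] generic_sum[OF fan s0 r0 ij Lp0, of "log 2 B"] unfolding p_def C_def by linarith
      also have "\<dots> \<le> h B" unfolding h_def
      proof (intro mult_left_mono mult_mono)
        show "Lp B + C + 1 \<le> A * (ln (ln B) / ln 2) + (2 * C + 1)" using Lp[OF B1] by simp
        show "(real (nat \<lfloor>log 2 B\<rfloor>) + 1)^p \<le> (ln B / ln 2 + 1)^p"
          using nat_floor_pow_le(1)[OF T0, of p] by (simp add: log_def)
        have "(2::real)^(nat \<lfloor>log 2 B\<rfloor>+1) = 2 * 2^(nat \<lfloor>log 2 B\<rfloor>)" by simp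
        also have "\<dots> \<le> 2 * 2 powr (log 2 B)" using nat_floor_pow_le(2)[OF T0] by simp
        also have "\<dots> = 2 * B" using B1 by simp
        finally show "(2::real)^(nat \<lfloor>log 2 B\<rfloor>+1) \<le> 2 * B" .
      qed (use B1 T0 Lp0 C0 nn in \<open>auto simp: log_def intro!: mult_nonneg_nonneg\<close>)
      finally show ?case by simp
    qed
    moreover have "h \<in> O[at_top](\<lambda>B. B * ln B powr real p * ln (ln B))"
      unfolding h_def by (rule asymp_generic)
    ultimately have "(\<lambda>B. real (card {X \<in> Acal nv Smax B. XE nv \<sigma>0 \<rho>0 X < ln B powr A}))
       \<in> O[at_top](\<lambda>B. B * ln B powr real p * ln (ln B))" by (rule bigo_dom)
    then show ?thesis unfolding rp .
  next
    assume "\<exists>\<mu>::real. \<mu> > 0 \<and> (\<forall>\<rho>. \<rho> \<notin> \<sigma>0 \<longrightarrow> real_of_int (ev nv \<sigma>0 \<rho>0 \<rho>) = \<mu> * real_of_int (a_coef nv \<sigma>0 \<rho>))"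
    then obtain \<mu> where mu: "\<mu> > 0" and deg: "\<forall>\<rho>. \<rho> \<notin> \<sigma>0 \<longrightarrow> real_of_int (ev nv \<sigma>0 \<rho>0 \<rho>) = \<mu> * real_of_int (a_coef nv \<sigma>0 \<rho>)"
      by blast
    define Am where "Am = 1 + (\<Sum>\<rho>\<in>UNIV. real_of_int \<bar>a_coef nv \<sigma>0 \<rho>\<bar>)"
    have Am1: "Am \<ge> 1" unfolding Am_def by (simp add: sum_nonneg)
    define e where "e = 1 / Am"
    have e0: "e > 0" using Am1 unfolding e_def by simp
    define h where "h B = (ln B / ln 2 + 1)^CARD('r) * B powr (1 - e) * ln B powr (A / (\<mu> * Am)) * 2 powr (C / (\<mu> * Am))"
      for B
    have "eventually (\<lambda>B. 0 \<le> real (card {X \<in> Acal nv Smax B. XE nv \<sigma>0 \<rho>0 X < ln B powr A}) \<and>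
        real (card {X \<in> Acal nv Smax B. XE nv \<sigma>0 \<rho>0 X < ln B powr A}) \<le> h B) at_top"
      using eventually_ge_at_top[of "exp 1"]
    proof eventually_elim
      case (elim B)
      have B1: "B > 1" using elim by (smt (verit) exp_gt_one zero_less_one)
      have lnB: "ln B \<ge> 1" using elim by (metis exp_gt_zero ln_exp ln_le_cancel_iff order_less_le_trans zero_less_one)
      have T0: "log 2 B \<ge> 0" using B1 by simp
      have "real (card {X \<in> Acal nv Smax B. XE nv \<sigma>0 \<rho>0 X < ln B powr A}) \<le>
        (real (nat \<lfloor>log 2 B\<rfloor>) + 1)^CARD('r) * 2 powr ((1 - 1/Am) * log 2 B + Lp B / (\<mu> * Am))"
        using base[OF B1] degen_sum[OF fan s0 r0 deg mu, of "log 2 B" "Lp B"] unfolding Am_def by linarith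
      also have "\<dots> \<le> h B"
      proof -
        have "2 powr ((1 - 1/Am) * log 2 B + Lp B / (\<mu> * Am)) =
           2 powr (log 2 B * (1 - e)) * 2 powr (log 2 (ln B) * (A / (\<mu> * Am))) * 2 powr (C / (\<mu> * Am))"
          unfolding Lp_def e_def using B1 by (simp add: log_powr powr_add[symmetric] add_divide_distrib algebra_simps)
        also have "\<dots> = B powr (1 - e) * ln B powr (A / (\<mu> * Am)) * 2 powr (C / (\<mu> * Am))"
          using B1 lnB two_powr_log[of B "1 - e"] two_powr_log[of "ln B" "A / (\<mu> * Am)"] by simp
        finally have eq: "2 powr ((1 - 1/Am) * log 2 B + Lp B / (\<mu> * Am)) =
           B powr (1 - e) * ln B powr (A / (\<mu> * Am)) * 2 powr (C / (\<mu> * Am))" .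
        have "(real (nat \<lfloor>log 2 B\<rfloor>) + 1)^CARD('r) \<le> (ln B / ln 2 + 1)^CARD('r)"
          using nat_floor_pow_le(1)[OF T0] by (simp add: log_def)
        then show ?thesis unfolding eq h_def
          by (simp only: mult.assoc) (rule mult_right_mono, simp_all)
      qed
      finally show ?case by simp
    qed
    moreover have "h \<in> O[at_top](\<lambda>B. B * ln B powr (real (pic_rank nv) - 2) * ln (ln B))"
      unfolding h_def by (rule asymp_degen[OF e0])
    ultimately show ?thesis by (rule bigo_dom)
  qed
qed

end


theorem theorem5p1:
  fixes nv :: "'r::finite \<Rightarrow> int^'d" and Smax :: "'r set set" and A :: real
  assumes "complete_regular_fan nv Smax"
    and "projective_fan nv Smax"
    and "antican_globally_generated nv Smax"
    and "A > 0"
  shows "(\<forall>B. finite (Acal nv Smax B - Aflat nv Smax A B)) \<and>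
    (\<lambda>B. real (card (Acal nv Smax B - Aflat nv Smax A B)))
      \<in> O[at_top](\<lambda>B. B * ln B powr (real (pic_rank nv) - 2) * ln (ln B))"
proof -
  note fan = assms(1) and gg = assms(3) and A = assms(4)
  have fin: "\<forall>B. finite (Acal nv Smax B - Aflat nv Smax A B)"
    using finite_Acal[OF fan gg] by auto
  define P where "P = Sigma Smax (\<lambda>\<sigma>. \<sigma>)"
  define Bad where "Bad p B = {X \<in> Acal nv Smax B. XE nv (fst p) (snd p) X < ln B powr A}"
    for p :: "'r set \<times> 'r" and B
  have finP: "finite P" unfolding P_def by (rule finite_subset[of _ UNIV]) auto
  have le: "real (card (Acal nv Smax B - Aflat nv Smax A B)) \<le> (\<Sum>p\<in>P. real (card (Bad p B)))" for B
  proof -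
    have sub: "Acal nv Smax B - Aflat nv Smax A B \<subseteq> (\<Union>p\<in>P. Bad p B)"
      unfolding Aflat_def Bad_def P_def by (auto simp: not_le)
    have finB: "finite (Bad p B)" for p
      unfolding Bad_def using finite_Acal[OF fan gg, of B] by simp
    have "card (Acal nv Smax B - Aflat nv Smax A B) \<le> card (\<Union>p\<in>P. Bad p B)"
      by (rule card_mono[OF _ sub]) (use finP finB in blast)
    also have "\<dots> \<le> (\<Sum>p\<in>P. card (Bad p B))" by (rule card_UN_le[OF finP])
    finally have "real (card (Acal nv Smax B - Aflat nv Smax A B)) \<le> real (\<Sum>p\<in>P. card (Bad p B))"
      by (simp only: of_nat_le_iff)
    then show ?thesis by simp
  qed
  have hs: "(\<lambda>B. \<Sum>p\<in>P. real (card (Bad p B))) \<in> O[at_top](\<lambda>B. B * ln B powr (real (pic_rank nv) - 2) * ln (ln B))"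
  proof (rule big_sum_in_bigo)
    fix p assume "p \<in> P"
    then have "fst p \<in> Smax" "snd p \<in> fst p" unfolding P_def by auto
    from bad_bigo[OF fan gg A this] show "(\<lambda>B. real (card (Bad p B))) \<in> O[at_top](\<lambda>B. B * ln B powr (real (pic_rank nv) - 2) * ln (ln B))"
      unfolding Bad_def .
  qed
  have "(\<lambda>B. real (card (Acal nv Smax B - Aflat nv Smax A B)))
      \<in> O[at_top](\<lambda>B. B * ln B powr (real (pic_rank nv) - 2) * ln (ln B))"
  proof (rule bigo_dom[of _ "\<lambda>B. \<Sum>p\<in>P. real (card (Bad p B))"])
    show "eventually (\<lambda>B. 0 \<le> real (card (Acal nv Smax B - Aflat nv Smax A B)) \<and>
       real (card (Acal nv Smax B - Aflat nv Smax A B)) \<le> (\<Sum>p\<in>P. real (card (Bad p B)))) at_top"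
      by (rule always_eventually) (use le of_nat_0_le_iff in blast)
  qed (fact hs)
  with fin show ?thesis by blast
qed


end
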